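(* Let $\Omega$ be a holomorphic one-form on an open ball $U\subset\mathbb{C}^{2m}$ centered at $0$ containing the closed unit ball $B^{4m}[0,1]$, such that $\Omega\cdot\vec R=0$ where $\vec R=\sum_{j=1}^{2m}z_j\,\partial/\partial z_j$, such that $\operatorname{Ker}(\Omega)$ is transverse to $S^{4m-1}(1)$, and such that the origin is the only zero of $\Omega$ in $B^{4m}[0,1]$. Let $A=(a_{ij})$ be the matrix for which the linear part of $\Omega$ at $0$ equals $\Omega_A=\sum_{i,j}a_{ij}z_i\,dz_j$, and assume $A$ is nonsingular. Set $\Omega^t(z)=t^{-1}\Omega(tz)$ for $t\in(0,1]$ and $\Omega^0=\Omega_A$. Then $\{\operatorname{Ker}(\Omega^t)\}_{t\in[0,1]}$ is a real analytic deformation of $\operatorname{Ker}(\Omega)=\operatorname{Ker}(\Omega^1)$ into $\operatorname{Ker}(\Omega_A)$ by holomorphic distributions $\operatorname{Ker}(\Omega^t)$, each of which is transverse to $S^{4m-1}(1)$ outside $S^{4m-1}(1)\cap\operatorname{sing}(\Omega^t)$.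
   Context: $\operatorname{sing}(\Omega^t)$ denotes the zero set of $\Omega^t$. $S^{4m-1}(1)$ is the unit sphere in $\mathbb{C}^{2m}$. *)

theory Defs
  imports "HOL-Analysis.Analysis"
begin

text \<open>A holomorphic one-form on an open set of C^N is encoded by its coefficient
  vector field: Omega = sum_j (w z)$j dz_j, with w :: complex^'n => complex^'n.\<close>

definition oneform_apply :: "complex ^ 'n \<Rightarrow> complex ^ 'n \<Rightarrow> complex" where
  "oneform_apply w v = (\<Sum>j\<in>UNIV. w $ j * v $ j)"

definition holomorphic_several ::
  "(complex ^ 'n) set \<Rightarrow> (complex ^ 'n \<Rightarrow> complex ^ 'm) \<Rightarrow> bool" where
  "holomorphic_several U f \<longleftrightarrow>
     (\<forall>z\<in>U. \<exists>L. (f has_derivative L) (at z) \<and> (\<forall>(c::complex) v. L (c *s v) = c *s L v))"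

definition oneform_kernel :: "complex ^ 'n \<Rightarrow> (complex ^ 'n) set" where
  "oneform_kernel w = {v. oneform_apply w v = 0}"

definition sphere_tangent :: "complex ^ 'n \<Rightarrow> (complex ^ 'n) set" where
  "sphere_tangent z = {v. inner v z = 0}"

definition transverse_sphere_at :: "complex ^ 'n \<Rightarrow> complex ^ 'n \<Rightarrow> bool" where
  "transverse_sphere_at w z \<longleftrightarrow>
     {a + b | a b. a \<in> oneform_kernel w \<and> b \<in> sphere_tangent z} = UNIV"

definition multi_indices :: "('a::euclidean_space \<Rightarrow> nat) set" where
  "multi_indices = {\<alpha>. \<forall>b. b \<notin> Basis \<longrightarrow> \<alpha> b = 0}"

definition real_analytic_on ::
  "'a::euclidean_space set \<Rightarrow> ('a \<Rightarrow> 'b::real_normed_vector) \<Rightarrow> bool" where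
  "real_analytic_on S F \<longleftrightarrow>
     (\<forall>x\<in>S. \<exists>r>0. \<exists>c :: ('a \<Rightarrow> nat) \<Rightarrow> 'b.
        (\<forall>y\<in>ball x r. (\<lambda>\<alpha>. (\<Prod>b\<in>Basis. ((y - x) \<bullet> b) ^ \<alpha> b) *\<^sub>R c \<alpha>) summable_on multi_indices) \<and>
        (\<forall>y\<in>S \<inter> ball x r.
           ((\<lambda>\<alpha>. (\<Prod>b\<in>Basis. ((y - x) \<bullet> b) ^ \<alpha> b) *\<^sub>R c \<alpha>) has_sum F y) multi_indices))"

text \<open>Omega_A = sum_{i,j} a_ij z_i dz_j has coefficient vector z v* A.\<close>

definition linear_form :: "complex ^ 'n ^ 'n \<Rightarrow> complex ^ 'n \<Rightarrow> complex ^ 'n" where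
  "linear_form A z = z v* A"

definition rescaled_form ::
  "(complex ^ 'n \<Rightarrow> complex ^ 'n) \<Rightarrow> complex ^ 'n ^ 'n \<Rightarrow> real \<Rightarrow> complex ^ 'n \<Rightarrow> complex ^ 'n" where
  "rescaled_form \<Omega> A t z = (if t = 0 then linear_form A z else inverse t *\<^sub>R \<Omega> (t *\<^sub>R z))"

end

theory Submission
  imports Defs "HOL-Complex_Analysis.Complex_Analysis"
begin

lemma param_cont_circle:
  fixes F :: "'a::metric_space \<Rightarrow> complex \<Rightarrow> complex"
  assumes cont: "continuous_on (X \<times> sphere c R) (\<lambda>(x,\<zeta>). F x \<zeta>)" and R: "R > 0"
  shows "continuous_on X (\<lambda>x. contour_integral (circlepath c R) (F x))"
proof (clarsimp simp: continuous_on_iff)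
  fix x0 e assume x0: "x0 \<in> X" and e: "(0::real) < e"
  define e' where "e' = e / (4 * pi * R)"
  have e': "e' > 0" using e R by (simp add: e'_def)
  obtain X0 where X0: "x0 \<in> X0" "open X0"
    "\<forall>x\<in>X0 \<inter> X. \<forall>t \<in> sphere c R. dist ((\<lambda>(x,\<zeta>). F x \<zeta>) (x, t)) ((\<lambda>(x,\<zeta>). F x \<zeta>) (x0, t)) \<le> e'"
    using continuous_on_prod_compactE[OF cont compact_sphere x0 e'] by blast
  obtain d where d: "d > 0" "ball x0 d \<subseteq> X0" using X0 openE by blast
  have ci: "F x contour_integrable_on circlepath c R" if "x \<in> X" for x
  proof (rule contour_integrable_continuous_circlepath)
    show "continuous_on (path_image (circlepath c R)) (F x)"
    proof -
      have "continuous_on (sphere c R) (\<lambda>\<zeta>. (\<lambda>(x,\<zeta>). F x \<zeta>) (x, \<zeta>))"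
        by (rule continuous_on_compose2[OF cont]) (auto intro!: continuous_intros simp: that)
      then show ?thesis using R by simp
    qed
  qed
  show "\<exists>d>0. \<forall>x'\<in>X. dist x' x0 < d \<longrightarrow>
      dist (contour_integral (circlepath c R) (F x')) (contour_integral (circlepath c R) (F x0)) < e"
  proof (intro exI[of _ d] conjI ballI impI)
    fix x assume x: "x \<in> X" "dist x x0 < d"
    then have xX0: "x \<in> X0 \<inter> X" using d by (auto simp: dist_commute)
    have "((\<lambda>\<zeta>. F x \<zeta> - F x0 \<zeta>) has_contour_integral
        (contour_integral (circlepath c R) (F x) - contour_integral (circlepath c R) (F x0))) (circlepath c R)"
      by (intro has_contour_integral_diff has_contour_integral_integral ci x x0)
    then have "norm (contour_integral (circlepath c R) (F x) - contour_integral (circlepath c R) (F x0))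
        \<le> e' * (2 * pi * R)"
    proof (rule has_contour_integral_bound_circlepath)
      show "0 \<le> e'" using e' by simp
      show "0 < R" by fact
      fix \<zeta> :: complex assume "norm (\<zeta> - c) = R"
      then have "\<zeta> \<in> sphere c R" by (simp add: dist_norm norm_minus_commute)
      then show "norm (F x \<zeta> - F x0 \<zeta>) \<le> e'" using X0(3) xX0 by (auto simp: dist_norm)
    qed
    also have "\<dots> < e" using e R by (simp add: e'_def field_simps)
    finally show "dist (contour_integral (circlepath c R) (F x)) (contour_integral (circlepath c R) (F x0)) < e"
      by (simp add: dist_norm)
  qed (use d in auto)
qed

lemma param_cont_line:
  fixes F :: "'a::metric_space \<Rightarrow> complex \<Rightarrow> complex"
  assumes cont: "continuous_on (X \<times> closed_segment a b) (\<lambda>(x,\<zeta>). F x \<zeta>)"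
  shows "continuous_on X (\<lambda>x. contour_integral (linepath a b) (F x))"
proof (clarsimp simp: continuous_on_iff)
  fix x0 e assume x0: "x0 \<in> X" and e: "(0::real) < e"
  define e' where "e' = e / (2 * (norm (b - a) + 1))"
  have e': "e' > 0" unfolding e'_def using e by (intro divide_pos_pos) (auto intro: add_nonneg_pos)
  obtain X0 where X0: "x0 \<in> X0" "open X0"
    "\<forall>x\<in>X0 \<inter> X. \<forall>t \<in> closed_segment a b. dist ((\<lambda>(x,\<zeta>). F x \<zeta>) (x, t)) ((\<lambda>(x,\<zeta>). F x \<zeta>) (x0, t)) \<le> e'"
    using continuous_on_prod_compactE[OF cont compact_segment x0 e'] by blast
  obtain d where d: "d > 0" "ball x0 d \<subseteq> X0" using X0 openE by blast
  have ci: "F x contour_integrable_on linepath a b" if "x \<in> X" for x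
  proof (rule contour_integrable_continuous_linepath)
    show "continuous_on (closed_segment a b) (F x)"
    proof -
      have "continuous_on (closed_segment a b) (\<lambda>\<zeta>. (\<lambda>(x,\<zeta>). F x \<zeta>) (x, \<zeta>))"
        by (rule continuous_on_compose2[OF cont]) (auto intro!: continuous_intros simp: that)
      then show ?thesis by simp
    qed
  qed
  show "\<exists>d>0. \<forall>x'\<in>X. dist x' x0 < d \<longrightarrow>
      dist (contour_integral (linepath a b) (F x')) (contour_integral (linepath a b) (F x0)) < e"
  proof (intro exI[of _ d] conjI ballI impI)
    fix x assume x: "x \<in> X" "dist x x0 < d"
    then have xX0: "x \<in> X0 \<inter> X" using d by (auto simp: dist_commute)
    have "((\<lambda>\<zeta>. F x \<zeta> - F x0 \<zeta>) has_contour_integral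
        (contour_integral (linepath a b) (F x) - contour_integral (linepath a b) (F x0))) (linepath a b)"
      by (intro has_contour_integral_diff has_contour_integral_integral ci x x0)
    then have "norm (contour_integral (linepath a b) (F x) - contour_integral (linepath a b) (F x0))
        \<le> e' * norm (b - a)"
    proof (rule has_contour_integral_bound_linepath)
      show "0 \<le> e'" using e' by simp
      fix \<zeta> :: complex assume "\<zeta> \<in> closed_segment a b"
      then show "norm (F x \<zeta> - F x0 \<zeta>) \<le> e'" using X0(3) xX0 by (auto simp: dist_norm)
    qed
    also have "\<dots> < e"
    proof -
      have p: "0 < 2 * (norm (b - a) + 1)" by (simp add: add_nonneg_pos)
      have n: "norm (b - a) < 2 * (norm (b - a) + 1)" by (smt (verit) norm_ge_zero)
      have "e * norm (b - a) < e * (2 * (norm (b - a) + 1))" using mult_strict_left_mono[OF n e] .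
      moreover have "0 < norm (b - a) + 2" using norm_ge_zero[of "b - a"] by linarith
      ultimately show ?thesis using p by (simp add: e'_def pos_divide_less_eq)
    qed
    finally show "dist (contour_integral (linepath a b) (F x)) (contour_integral (linepath a b) (F x0)) < e"
      by (simp add: dist_norm)
  qed (use d in auto)
qed

lemma param_holo_circle:
  fixes F :: "complex \<Rightarrow> complex \<Rightarrow> complex"
  assumes S: "open S" and R: "R > 0"
    and cont: "continuous_on (S \<times> sphere c R) (\<lambda>(\<eta>,\<zeta>). F \<eta> \<zeta>)"
    and hol: "\<And>\<zeta>. \<zeta> \<in> sphere c R \<Longrightarrow> (\<lambda>\<eta>. F \<eta> \<zeta>) holomorphic_on S"
  shows "(\<lambda>\<eta>. contour_integral (circlepath c R) (F \<eta>)) holomorphic_on S"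
proof -
  define G where "G = (\<lambda>\<eta>. contour_integral (circlepath c R) (F \<eta>))"
  have contG: "continuous_on S G"
    unfolding G_def by (rule param_cont_circle[OF cont R])
  have cont_sw: "continuous_on (sphere c R \<times> S) (\<lambda>(\<zeta>,\<eta>). F \<eta> \<zeta>)"
    by (rule continuous_on_swap_args[OF cont])
  have vdc: "continuous_on {0..1} (\<lambda>t. vector_derivative (circlepath c R) (at t))"
    by (simp add: vector_derivative_circlepath) (intro continuous_intros)
  have seg: "contour_integral (linepath x1 x2) G =
      contour_integral (circlepath c R) (\<lambda>\<zeta>. contour_integral (linepath x1 x2) (\<lambda>\<eta>. F \<eta> \<zeta>))"
    and segi: "(\<lambda>\<zeta>. contour_integral (linepath x1 x2) (\<lambda>\<eta>. F \<eta> \<zeta>)) contour_integrable_on circlepath c R"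
    if sub: "closed_segment x1 x2 \<subseteq> S" for x1 x2
  proof -
    show "contour_integral (linepath x1 x2) G =
      contour_integral (circlepath c R) (\<lambda>\<zeta>. contour_integral (linepath x1 x2) (\<lambda>\<eta>. F \<eta> \<zeta>))"
      unfolding G_def
    proof (rule contour_integral_swap)
      show "continuous_on (path_image (linepath x1 x2) \<times> path_image (circlepath c R)) (\<lambda>(y1, y2). F y1 y2)"
        using R sub by (auto intro: continuous_on_subset[OF cont])
      show "continuous_on {0..1} (\<lambda>t. vector_derivative (linepath x1 x2) (at t))"
        by (auto intro!: continuous_intros)
    qed (use vdc in auto)
    show "(\<lambda>\<zeta>. contour_integral (linepath x1 x2) (\<lambda>\<eta>. F \<eta> \<zeta>)) contour_integrable_on circlepath c R"
    proof (rule contour_integrable_continuous_circlepath)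
      have "continuous_on (sphere c R) (\<lambda>\<zeta>. contour_integral (linepath x1 x2) (\<lambda>\<eta>. F \<eta> \<zeta>))"
        by (rule param_cont_line, rule continuous_on_subset[OF cont_sw]) (use sub in blast)
      then show "continuous_on (path_image (circlepath c R)) (\<lambda>\<zeta>. contour_integral (linepath x1 x2) (\<lambda>\<eta>. F \<eta> \<zeta>))"
        using R by simp
    qed
  qed
  have "G analytic_on S"
  proof (rule Morera_triangle[OF contG S], intro allI impI)
    fix a b c' assume hull: "convex hull {a, b, c'} \<subseteq> S"
    have abc: "closed_segment a b \<subseteq> S" "closed_segment b c' \<subseteq> S" "closed_segment c' a \<subseteq> S"
      by (rule order_trans[OF _ hull], rule segments_subset_convex_hull)+
    have eq0: "contour_integral (linepath a b) (\<lambda>\<eta>. F \<eta> \<zeta>) + (contour_integral (linepath b c') (\<lambda>\<eta>. F \<eta> \<zeta>) +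
        contour_integral (linepath c' a) (\<lambda>\<eta>. F \<eta> \<zeta>)) = 0" if z: "\<zeta> \<in> path_image (circlepath c R)" for \<zeta>
    proof -
      have z': "\<zeta> \<in> sphere c R" using z R by simp
      have hz: "(\<lambda>\<eta>. F \<eta> \<zeta>) holomorphic_on S" using hol[OF z'] .
      have ci: "(\<lambda>\<eta>. F \<eta> \<zeta>) contour_integrable_on linepath x1 x2" if "closed_segment x1 x2 \<subseteq> S" for x1 x2
        by (rule contour_integrable_holomorphic_simple[OF hz S]) (simp_all add: that)
      have "contour_integral (linepath a b +++ linepath b c' +++ linepath c' a) (\<lambda>\<eta>. F \<eta> \<zeta>) = 0"
        by (rule contour_integral_unique[OF Cauchy_theorem_triangle]) (rule holomorphic_on_subset[OF hz hull])
      moreover note c1 = ci[OF abc(1)] ci[OF abc(2)] ci[OF abc(3)]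
      moreover have cj: "(\<lambda>\<eta>. F \<eta> \<zeta>) contour_integrable_on (linepath b c' +++ linepath c' a)"
        by (rule contour_integrable_joinI[OF c1(2) c1(3)]) simp_all
      ultimately show ?thesis
        by (simp add: contour_integral_join[OF c1(1) cj] contour_integral_join[OF c1(2) c1(3)])
    qed
    show "contour_integral (linepath a b) G + contour_integral (linepath b c') G + contour_integral (linepath c' a) G = 0"
    proof -
      have "contour_integral (linepath a b) G + contour_integral (linepath b c') G + contour_integral (linepath c' a) G
        = contour_integral (circlepath c R) (\<lambda>\<zeta>. contour_integral (linepath a b) (\<lambda>\<eta>. F \<eta> \<zeta>)) +
          (contour_integral (circlepath c R) (\<lambda>\<zeta>. contour_integral (linepath b c') (\<lambda>\<eta>. F \<eta> \<zeta>)) +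
           contour_integral (circlepath c R) (\<lambda>\<zeta>. contour_integral (linepath c' a) (\<lambda>\<eta>. F \<eta> \<zeta>)))"
        by (simp only: seg abc add.assoc)
      also have "\<dots> = contour_integral (circlepath c R) (\<lambda>\<zeta>. contour_integral (linepath a b) (\<lambda>\<eta>. F \<eta> \<zeta>) +
          (contour_integral (linepath b c') (\<lambda>\<eta>. F \<eta> \<zeta>) + contour_integral (linepath c' a) (\<lambda>\<eta>. F \<eta> \<zeta>)))"
      proof -
        note i = segi[OF abc(1)] segi[OF abc(2)] segi[OF abc(3)]
        show ?thesis
          by (simp only: contour_integral_add[OF i(1) contour_integrable_add[OF i(2) i(3)]]
               contour_integral_add[OF i(2) i(3)])
      qed
      also have "\<dots> = 0" by (rule contour_integral_eq_0) (rule eq0)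
      finally show ?thesis .
    qed
  qed
  then show ?thesis unfolding G_def[symmetric] by (rule analytic_imp_holomorphic)
qed


definition vupd :: "'a^'k \<Rightarrow> 'k \<Rightarrow> 'a \<Rightarrow> 'a^'k" where
  "vupd w j z = (\<chi> i. if i = j then z else w $ i)"

lemma vupd_nth [simp]: "vupd w j z $ i = (if i = j then z else w $ i)"
  by (simp add: vupd_def)

lemma vupd_vupd_same [simp]: "vupd (vupd w j a) j b = vupd w j b"
  by (simp add: vupd_def vec_eq_iff)

lemma vupd_comm: "j \<noteq> k \<Longrightarrow> vupd (vupd w j a) k b = vupd (vupd w k b) j a"
  by (simp add: vupd_def vec_eq_iff)

lemma vupd_id [simp]: "vupd w j (w $ j) = w"
  by (simp add: vupd_def vec_eq_iff)

lemma continuous_on_vupd [continuous_intros]: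
  assumes "continuous_on S f" "continuous_on S g"
  shows "continuous_on S (\<lambda>x. vupd (f x) j (g x))"
  unfolding vupd_def
proof (rule continuous_on_vec_lambda)
  fix i show "continuous_on S (\<lambda>x. if i = j then g x else f x $ i)"
    by (cases "i = j") (auto intro!: continuous_intros assms)
qed

definition pcb :: "complex^'k \<Rightarrow> real \<Rightarrow> (complex^'k) set" where
  "pcb a \<rho> = {w. \<forall>j. cmod (w $ j - a $ j) \<le> \<rho>}"

lemma vupd_in_pcb: "w \<in> pcb a \<rho> \<Longrightarrow> cmod (z - a $ j) \<le> \<rho> \<Longrightarrow> vupd w j z \<in> pcb a \<rho>"
  by (auto simp: pcb_def)

lemma multigeo_summable:
  fixes q :: "'k::finite \<Rightarrow> real"
  assumes q: "\<And>j. 0 \<le> q j" "\<And>j. q j < 1"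
  shows "(\<lambda>\<beta>::'k \<Rightarrow> nat. \<Prod>j\<in>UNIV. q j ^ \<beta> j) summable_on UNIV"
proof (rule nonneg_bdd_above_summable_on)
  show "\<And>x. x \<in> UNIV \<Longrightarrow> 0 \<le> (\<Prod>j\<in>UNIV. q j ^ x j)"
    using q by (auto intro!: prod_nonneg)
  show "bdd_above (sum (\<lambda>\<beta>. \<Prod>j\<in>UNIV. q j ^ \<beta> j) ` {F. F \<subseteq> UNIV \<and> finite F})"
  proof (rule bdd_aboveI2)
    fix F :: "('k \<Rightarrow> nat) set" assume "F \<in> {F. F \<subseteq> UNIV \<and> finite F}"
    then have F: "finite F" by simp
    define N where "N = Max ((\<lambda>(\<beta>, j). \<beta> j) ` (F \<times> UNIV))"
    have FN: "F \<subseteq> PiE UNIV (\<lambda>_. {..N})"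
    proof
      fix \<beta> assume "\<beta> \<in> F"
      then have "\<beta> j \<le> N" for j
        unfolding N_def using F by (intro Max_ge) auto
      then show "\<beta> \<in> PiE UNIV (\<lambda>_. {..N})" by (auto simp: PiE_def extensional_def)
    qed
    have "(\<Sum>\<beta>\<in>F. \<Prod>j\<in>UNIV. q j ^ \<beta> j) \<le> (\<Sum>\<beta>\<in>PiE UNIV (\<lambda>_. {..N}). \<Prod>j\<in>UNIV. q j ^ \<beta> j)"
      by (rule sum_mono2) (use FN q in \<open>auto intro!: prod_nonneg finite_PiE\<close>)
    also have "\<dots> = (\<Prod>j\<in>UNIV. \<Sum>n\<in>{..N}. q j ^ n)"
      by (rule prod_sum_PiE[symmetric]) auto
    also have "\<dots> \<le> (\<Prod>j\<in>UNIV. 1 / (1 - q j))"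
    proof (rule prod_mono, rule conjI)
      fix j :: 'k
      show "0 \<le> (\<Sum>n\<in>{..N}. q j ^ n)" using q by (auto intro!: sum_nonneg)
      have s: "summable (\<lambda>n. q j ^ n)" using q by (intro summable_geometric) auto
      have "(\<Sum>n\<in>{..N}. q j ^ n) = (\<Sum>n<Suc N. q j ^ n)" by (intro sum.cong) auto
      also have "\<dots> \<le> (\<Sum>n. q j ^ n)" using q by (intro sum_le_suminf s) auto
      also have "\<dots> = 1 / (1 - q j)" using q by (subst suminf_geometric) auto
      finally show "(\<Sum>n\<in>{..N}. q j ^ n) \<le> 1 / (1 - q j)" .
    qed
    finally show "(\<Sum>\<beta>\<in>F. \<Prod>j\<in>UNIV. q j ^ \<beta> j) \<le> (\<Prod>j\<in>UNIV. 1 / (1 - q j))" .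
  qed
qed

lemma prod_upd_pow:
  fixes u :: "'k::finite \<Rightarrow> 'a::comm_monoid_mult"
  assumes "\<gamma> k = 0"
  shows "(\<Prod>j\<in>UNIV. u j ^ (\<gamma>(k:=m)) j) = (\<Prod>j\<in>UNIV. u j ^ \<gamma> j) * u k ^ m"
proof -
  have "(\<Prod>j\<in>UNIV. u j ^ (\<gamma>(k:=m)) j) = u k ^ m * (\<Prod>j\<in>UNIV-{k}. u j ^ (\<gamma>(k:=m)) j)"
    by (subst prod.remove[of UNIV k]) auto
  also have "(\<Prod>j\<in>UNIV-{k}. u j ^ (\<gamma>(k:=m)) j) = (\<Prod>j\<in>UNIV-{k}. u j ^ \<gamma> j)"
    by (intro prod.cong) auto
  also have "(\<Prod>j\<in>UNIV-{k}. u j ^ \<gamma> j) = (\<Prod>j\<in>UNIV. u j ^ \<gamma> j)"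
  proof -
    have "(\<Prod>j\<in>UNIV. u j ^ \<gamma> j) = u k ^ \<gamma> k * (\<Prod>j\<in>UNIV-{k}. u j ^ \<gamma> j)"
      by (subst prod.remove[of UNIV k]) auto
    then show ?thesis using assms by simp
  qed
  finally show ?thesis by (simp add: mult.commute)
qed

lemma sum_upd_split:
  fixes \<beta> :: "'k::finite \<Rightarrow> nat"
  shows "(\<Sum>j\<in>UNIV. \<beta> j) = \<beta> k + (\<Sum>j\<in>UNIV. (\<beta>(k:=0)) j)"
proof -
  have "(\<Sum>j\<in>UNIV. \<beta> j) = \<beta> k + (\<Sum>j\<in>UNIV-{k}. \<beta> j)"
    by (subst sum.remove[of UNIV k]) auto
  moreover have "(\<Sum>j\<in>UNIV. (\<beta>(k:=0)) j) = (\<Sum>j\<in>UNIV-{k}. \<beta> j)"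
    by (subst sum.remove[of UNIV k]) (auto intro!: sum.cong)
  ultimately show ?thesis by simp
qed

lemma osgood_aux:
  fixes a :: "complex^'k::finite" and \<rho> :: real and I :: "'k set"
  assumes I: "finite I" and \<rho>: "\<rho> > 0"
  shows "continuous_on (pcb a \<rho>) f \<Longrightarrow>
    (\<And>w j. w \<in> pcb a \<rho> \<Longrightarrow> (\<lambda>\<zeta>. f (vupd w j \<zeta>)) holomorphic_on ball (a$j) \<rho>) \<Longrightarrow>
    (\<And>w. w \<in> pcb a \<rho> \<Longrightarrow> cmod (f w) \<le> M) \<Longrightarrow>
    (\<And>w w'. \<forall>j\<in>I. w$j = w'$j \<Longrightarrow> f w = f w') \<Longrightarrow>
    \<exists>c. (\<forall>\<beta>. (\<exists>j. j \<notin> I \<and> \<beta> j \<noteq> 0) \<longrightarrow> c \<beta> = 0) \<and>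
        (\<forall>\<beta>. cmod (c \<beta>) \<le> M / \<rho> ^ (\<Sum>j\<in>UNIV. \<beta> j)) \<and>
        (\<forall>w. (\<forall>j. cmod (w$j - a$j) < \<rho>) \<longrightarrow>
           ((\<lambda>\<beta>. c \<beta> * (\<Prod>j\<in>UNIV. (w$j - a$j) ^ \<beta> j)) has_sum f w) UNIV)"
  using I
proof (induction I arbitrary: f M rule: finite_induct)
  case empty
  have fa: "f w = f a" for w using empty.prems(4) by auto
  have a: "a \<in> pcb a \<rho>" using \<rho> by (simp add: pcb_def)
  have M: "cmod (f a) \<le> M" using empty.prems(3)[OF a] .
  define c where "c = (\<lambda>\<beta>::'k\<Rightarrow>nat. if \<beta> = (\<lambda>_. 0) then f a else 0)"
  show ?case
  proof (intro exI[of _ c] conjI allI impI)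
    fix \<beta> :: "'k \<Rightarrow> nat" assume "\<exists>j. j \<notin> {} \<and> \<beta> j \<noteq> 0"
    then show "c \<beta> = 0" by (auto simp: c_def)
  next
    fix \<beta> :: "'k\<Rightarrow>nat"
    have "0 \<le> M" using M norm_ge_zero order_trans by blast
    then show "cmod (c \<beta>) \<le> M / \<rho> ^ (\<Sum>j\<in>UNIV. \<beta> j)"
      using M \<rho> by (auto simp: c_def)
  next
    fix w :: "complex^'k"
    define F where "F = (\<lambda>\<beta>. c \<beta> * (\<Prod>j\<in>UNIV. (w$j - a$j) ^ \<beta> j))"
    have "(F has_sum f w) {\<lambda>_. 0}"
    proof -
      have "(F has_sum sum F {\<lambda>_. 0}) {\<lambda>_. 0}" by (rule has_sum_finite) simp
      moreover have "sum F {\<lambda>_. 0} = f w" by (simp add: F_def c_def) (metis fa)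
      ultimately show ?thesis by simp
    qed
    moreover have "(F has_sum f w) {\<lambda>_. 0} \<longleftrightarrow> (F has_sum f w) UNIV"
      by (rule has_sum_cong_neutral) (auto simp: F_def c_def)
    ultimately show "(F has_sum f w) UNIV" by simp
  qed
next
  case (insert k I)
  note cont = insert.prems(1) and hol = insert.prems(2) and bnd = insert.prems(3) and ind = insert.prems(4)
  have a: "a \<in> pcb a \<rho>" using \<rho> by (simp add: pcb_def)
  have M0: "0 \<le> M" using bnd[OF a] norm_ge_zero order_trans by blast
  define h where "h w = (\<lambda>\<zeta>. f (vupd w k \<zeta>))" for w
  define g where "g m w = (deriv ^^ m) (h w) (a$k) / fact m" for m w
  define \<gamma> where "\<gamma> = circlepath (a$k) \<rho>"
  have ak: "a$k \<in> ball (a$k) \<rho>" using \<rho> by simp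
  have hc: "continuous_on (cball (a$k) \<rho>) (h w)" if "w \<in> pcb a \<rho>" for w
    unfolding h_def
    by (rule continuous_on_compose2[OF cont])
       (auto intro!: continuous_intros vupd_in_pcb that simp: dist_norm norm_minus_commute)
  have hh: "h w holomorphic_on ball (a$k) \<rho>" if "w \<in> pcb a \<rho>" for w
    using hol[OF that, of k] by (simp add: h_def)
  have gint: "g m w = contour_integral \<gamma> (\<lambda>u. f (vupd w k u) / (u - a$k)^(Suc m)) / (2*pi*\<i>)"
    if w: "w \<in> pcb a \<rho>" for m w
  proof -
    have "((\<lambda>u. h w u / (u - a$k)^(Suc m)) has_contour_integral
        ((2 * pi * \<i>) / (fact m) * (deriv ^^ m) (h w) (a$k))) \<gamma>"
      unfolding \<gamma>_def by (rule Cauchy_has_contour_integral_higher_derivative_circlepath[OF hc[OF w] hh[OF w] ak])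
    then have "contour_integral \<gamma> (\<lambda>u. f (vupd w k u) / (u - a$k)^(Suc m)) =
        (2 * pi * \<i>) / (fact m) * (deriv ^^ m) (h w) (a$k)"
      by (simp add: h_def contour_integral_unique)
    then show ?thesis by (simp add: g_def field_simps)
  qed
  have Fcont: "continuous_on (pcb a \<rho> \<times> sphere (a$k) \<rho>) (\<lambda>(w,u). f (vupd w k u) / (u - a$k)^(Suc m))" for m
  proof -
    have c1: "continuous_on (pcb a \<rho> \<times> sphere (a$k) \<rho>) (\<lambda>p. f (vupd (fst p) k (snd p)))"
      by (rule continuous_on_compose2[OF cont])
         (auto intro!: continuous_intros vupd_in_pcb simp: dist_norm norm_minus_commute)
    have "continuous_on (pcb a \<rho> \<times> sphere (a$k) \<rho>) (\<lambda>p. f (vupd (fst p) k (snd p)) / (snd p - a$k)^(Suc m))"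
      using \<rho> by (intro continuous_intros c1) (auto simp: dist_norm)
    then show ?thesis by (simp add: split_beta)
  qed
  have gcont: "continuous_on (pcb a \<rho>) (g m)" for m
  proof -
    have "continuous_on (pcb a \<rho>) (\<lambda>w. contour_integral \<gamma> (\<lambda>u. f (vupd w k u) / (u - a$k)^(Suc m)) / (2*pi*\<i>))"
      unfolding \<gamma>_def by (intro continuous_intros param_cont_circle[OF Fcont \<rho>]) (simp add: pi_neq_zero)
    then show ?thesis by (rule continuous_on_cong[THEN iffD1, rotated 2]) (auto simp: gint)
  qed
  have ghol: "(\<lambda>\<eta>. g m (vupd w j \<eta>)) holomorphic_on ball (a$j) \<rho>" if w: "w \<in> pcb a \<rho>" for m w j
  proof (cases "j = k")
    case True
    then show ?thesis by (simp add: g_def h_def)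
  next
    case False
    define F where "F \<eta> u = f (vupd (vupd w j \<eta>) k u) / (u - a$k)^(Suc m)" for \<eta> u
    have inb: "vupd w j \<eta> \<in> pcb a \<rho>" if "\<eta> \<in> ball (a$j) \<rho>" for \<eta>
      using that w by (intro vupd_in_pcb) (auto simp: dist_norm norm_minus_commute)
    have "(\<lambda>\<eta>. contour_integral \<gamma> (F \<eta>)) holomorphic_on ball (a$j) \<rho>"
      unfolding \<gamma>_def
    proof (rule param_holo_circle[OF open_ball \<rho>])
      have "continuous_on (ball (a$j) \<rho> \<times> sphere (a$k) \<rho>) ((\<lambda>(w,u). f (vupd w k u) / (u - a$k)^(Suc m)) \<circ> (\<lambda>p. (vupd w j (fst p), snd p)))"
        by (rule continuous_on_compose, intro continuous_intros, rule continuous_on_subset[OF Fcont])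
           (auto intro: inb)
      then show "continuous_on (ball (a$j) \<rho> \<times> sphere (a$k) \<rho>) (\<lambda>(\<eta>, \<zeta>). F \<eta> \<zeta>)"
        by (simp add: F_def o_def split_beta)
      fix \<zeta> assume z: "\<zeta> \<in> sphere (a$k) \<rho>"
      have w': "vupd w k \<zeta> \<in> pcb a \<rho>" using z w by (intro vupd_in_pcb) (auto simp: dist_norm norm_minus_commute)
      have "(\<lambda>\<eta>. f (vupd (vupd w k \<zeta>) j \<eta>) / (\<zeta> - a$k)^(Suc m)) holomorphic_on ball (a$j) \<rho>"
        by (intro holomorphic_intros hol[OF w']) (use z \<rho> in \<open>auto simp: dist_norm\<close>)
      then show "(\<lambda>\<eta>. F \<eta> \<zeta>) holomorphic_on ball (a$j) \<rho>"
        using False by (simp add: F_def vupd_comm)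
    qed
    then have "(\<lambda>\<eta>. contour_integral \<gamma> (F \<eta>) / (2*pi*\<i>)) holomorphic_on ball (a$j) \<rho>"
      by (intro holomorphic_intros) auto
    then show ?thesis
      by (rule holomorphic_transform) (auto simp: gint inb F_def[abs_def])
  qed
  have gbnd: "cmod (g m w) \<le> M / \<rho>^m" if w: "w \<in> pcb a \<rho>" for m w
  proof -
    have "norm ((deriv ^^ m) (h w) (a$k)) \<le> fact m * M / \<rho>^m"
    proof (rule Cauchy_inequality[OF hh[OF w] hc[OF w] \<rho>])
      fix x assume "norm (a$k - x) = \<rho>"
      then have "vupd w k x \<in> pcb a \<rho>" using w by (intro vupd_in_pcb) (auto simp: norm_minus_commute)
      then show "norm (h w x) \<le> M" by (simp add: h_def bnd)
    qed
    then show ?thesis by (simp add: g_def norm_divide field_simps)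
  qed
  have gind: "g m w = g m w'" if "\<forall>j\<in>I. w$j = w'$j" for m w w'
  proof -
    have "h w = h w'" unfolding h_def
      by (rule ext, rule ind) (use that in auto)
    then show ?thesis by (simp add: g_def)
  qed
  have "\<forall>m. \<exists>c. (\<forall>\<beta>. (\<exists>j. j \<notin> I \<and> \<beta> j \<noteq> 0) \<longrightarrow> c \<beta> = 0) \<and>
        (\<forall>\<beta>. cmod (c \<beta>) \<le> (M / \<rho>^m) / \<rho> ^ (\<Sum>j\<in>UNIV. \<beta> j)) \<and>
        (\<forall>w. (\<forall>j. cmod (w$j - a$j) < \<rho>) \<longrightarrow>
           ((\<lambda>\<beta>. c \<beta> * (\<Prod>j\<in>UNIV. (w$j - a$j) ^ \<beta> j)) has_sum g m w) UNIV)"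
  proof
    fix m show "\<exists>c. (\<forall>\<beta>. (\<exists>j. j \<notin> I \<and> \<beta> j \<noteq> 0) \<longrightarrow> c \<beta> = 0) \<and>
        (\<forall>\<beta>. cmod (c \<beta>) \<le> (M / \<rho>^m) / \<rho> ^ (\<Sum>j\<in>UNIV. \<beta> j)) \<and>
        (\<forall>w. (\<forall>j. cmod (w$j - a$j) < \<rho>) \<longrightarrow>
           ((\<lambda>\<beta>. c \<beta> * (\<Prod>j\<in>UNIV. (w$j - a$j) ^ \<beta> j)) has_sum g m w) UNIV)"
      by (rule insert.IH[OF gcont ghol gbnd gind])
  qed
  then obtain d where dP: "\<forall>m. (\<forall>\<beta>. (\<exists>j. j \<notin> I \<and> \<beta> j \<noteq> 0) \<longrightarrow> d m \<beta> = 0) \<and>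
        (\<forall>\<beta>. cmod (d m \<beta>) \<le> (M / \<rho>^m) / \<rho> ^ (\<Sum>j\<in>UNIV. \<beta> j)) \<and>
        (\<forall>w. (\<forall>j. cmod (w$j - a$j) < \<rho>) \<longrightarrow>
           ((\<lambda>\<beta>. d m \<beta> * (\<Prod>j\<in>UNIV. (w$j - a$j) ^ \<beta> j)) has_sum g m w) UNIV)"
    by (rule choice[THEN exE])
  have d0: "\<And>m \<beta>. (\<exists>j. j \<notin> I \<and> \<beta> j \<noteq> 0) \<Longrightarrow> d m \<beta> = 0"
    using dP by blast
  have db: "\<And>m \<beta>. cmod (d m \<beta>) \<le> (M / \<rho>^m) / \<rho> ^ (\<Sum>j\<in>UNIV. \<beta> j)"
    using dP by blast
  have ds: "\<And>m w. (\<forall>j. cmod (w$j - a$j) < \<rho>) \<Longrightarrow>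
           ((\<lambda>\<beta>. d m \<beta> * (\<Prod>j\<in>UNIV. (w$j - a$j) ^ \<beta> j)) has_sum g m w) UNIV"
    using dP by blast
  define c where "c \<beta> = d (\<beta> k) (\<beta>(k:=0))" for \<beta> :: "'k \<Rightarrow> nat"
  have cb: "cmod (c \<beta>) \<le> M / \<rho> ^ (\<Sum>j\<in>UNIV. \<beta> j)" for \<beta>
  proof -
    have "cmod (c \<beta>) \<le> (M / \<rho>^(\<beta> k)) / \<rho> ^ (\<Sum>j\<in>UNIV. (\<beta>(k:=0)) j)"
      unfolding c_def by (rule db)
    also have "\<dots> = M / \<rho> ^ (\<Sum>j\<in>UNIV. \<beta> j)"
      by (subst sum_upd_split[of \<beta> k]) (simp add: power_add)
    finally show ?thesis .
  qed
  show ?case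
  proof (intro exI[of _ c] conjI allI impI)
    fix \<beta> :: "'k \<Rightarrow> nat" assume "\<exists>j. j \<notin> insert k I \<and> \<beta> j \<noteq> 0"
    then obtain j where "j \<notin> insert k I" "\<beta> j \<noteq> 0" by blast
    then show "c \<beta> = 0" unfolding c_def by (intro d0) (rule exI[of _ j], auto)
  next
    fix \<beta> show "cmod (c \<beta>) \<le> M / \<rho> ^ (\<Sum>j\<in>UNIV. \<beta> j)" by (rule cb)
  next
    fix w :: "complex^'k" assume wl: "\<forall>j. cmod (w$j - a$j) < \<rho>"
    define u where "u j = w$j - a$j" for j
    define T where "T \<beta> = c \<beta> * (\<Prod>j\<in>UNIV. u j ^ \<beta> j)" for \<beta> :: "'k \<Rightarrow> nat"
    have Tb: "norm (T \<beta>) \<le> M * (\<Prod>j\<in>UNIV. (cmod (u j) / \<rho>) ^ \<beta> j)" for \<beta>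
    proof -
      have "norm (T \<beta>) = cmod (c \<beta>) * (\<Prod>j\<in>UNIV. cmod (u j) ^ \<beta> j)"
        by (simp add: T_def norm_mult prod_norm[symmetric] norm_power)
      also have "\<dots> \<le> M / \<rho> ^ (\<Sum>j\<in>UNIV. \<beta> j) * (\<Prod>j\<in>UNIV. cmod (u j) ^ \<beta> j)"
        by (intro mult_right_mono cb prod_nonneg) auto
      also have "\<dots> = M * (\<Prod>j\<in>UNIV. (cmod (u j) / \<rho>) ^ \<beta> j)"
        by (simp add: power_sum power_divide prod_dividef)
      finally show ?thesis .
    qed
    have "(\<lambda>\<beta>. M * (\<Prod>j\<in>UNIV. (cmod (u j) / \<rho>) ^ \<beta> j)) summable_on UNIV"
      using wl \<rho> by (intro summable_on_cmult_right multigeo_summable) (auto simp: u_def)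
    then have "(\<lambda>\<beta>. norm (T \<beta>)) summable_on UNIV"
      by (rule Infinite_Sum.abs_summable_on_comparison_test') (rule Tb)
    then have "T summable_on UNIV" by (rule abs_summable_summable)
    then obtain S where TS: "(T has_sum S) UNIV" using summable_on_def by blast
    define TT where "TT p = T ((snd p)(k := fst p))" for p :: "nat \<times> ('k \<Rightarrow> nat)"
    have TS2: "(TT has_sum S) (UNIV \<times> {\<gamma>. \<gamma> k = 0})"
    proof -
      have "(T has_sum S) UNIV = (TT has_sum S) (UNIV \<times> {\<gamma>. \<gamma> k = 0})"
        by (rule has_sum_reindex_bij_witness[where j="\<lambda>\<beta>. (\<beta> k, \<beta>(k:=0))" and i="\<lambda>p. (snd p)(k := fst p)"])
           (auto simp: TT_def)
      then show ?thesis using TS by simp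
    qed
    have inner: "((\<lambda>\<gamma>. TT (m, \<gamma>)) has_sum (g m w * u k ^ m)) {\<gamma>. \<gamma> k = 0}" for m
    proof -
      have "((\<lambda>\<beta>. d m \<beta> * (\<Prod>j\<in>UNIV. u j ^ \<beta> j)) has_sum g m w) UNIV"
        using ds[OF wl] by (simp add: u_def)
      moreover have "((\<lambda>\<beta>. d m \<beta> * (\<Prod>j\<in>UNIV. u j ^ \<beta> j)) has_sum g m w) UNIV \<longleftrightarrow>
          ((\<lambda>\<beta>. d m \<beta> * (\<Prod>j\<in>UNIV. u j ^ \<beta> j)) has_sum g m w) {\<gamma>. \<gamma> k = 0}"
        by (rule has_sum_cong_neutral) (auto intro!: d0 insert.hyps)
      ultimately have "((\<lambda>\<beta>. d m \<beta> * (\<Prod>j\<in>UNIV. u j ^ \<beta> j) * u k ^ m) has_sum g m w * u k ^ m) {\<gamma>. \<gamma> k = 0}"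
        by (intro has_sum_cmult_left) simp
      moreover have "TT (m, \<gamma>) = d m \<gamma> * (\<Prod>j\<in>UNIV. u j ^ \<gamma> j) * u k ^ m" if "\<gamma> k = 0" for \<gamma>
      proof -
        have "\<gamma>(k := 0) = \<gamma>" using that by auto
        then show ?thesis using that prod_upd_pow[of \<gamma> k u m, OF that] by (simp add: TT_def T_def c_def mult.assoc)
      qed
      ultimately show ?thesis by (subst has_sum_cong[where g="\<lambda>\<gamma>. d m \<gamma> * (\<Prod>j\<in>UNIV. u j ^ \<gamma> j) * u k ^ m"]) auto
    qed
    have outer: "((\<lambda>m. g m w * u k ^ m) has_sum S) UNIV"
      by (rule has_sum_SigmaD[OF TS2]) (use inner in auto)
    have wp: "w \<in> pcb a \<rho>" using wl by (auto simp: pcb_def less_imp_le)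
    have wb: "w$k \<in> ball (a$k) \<rho>" using wl by (auto simp: dist_norm norm_minus_commute)
    have "(\<lambda>m. (deriv ^^ m) (h w) (a$k) / fact m * (w$k - a$k)^m) sums h w (w$k)"
      by (rule holomorphic_power_series[OF hh[OF wp] wb])
    then have "(\<lambda>m. g m w * u k ^ m) sums f w" by (simp add: g_def u_def h_def)
    moreover have "(\<lambda>m. g m w * u k ^ m) sums S" by (rule has_sum_imp_sums[OF outer])
    ultimately have "S = f w" using sums_unique2 by blast
    then show "((\<lambda>\<beta>. c \<beta> * (\<Prod>j\<in>UNIV. (w$j - a$j) ^ \<beta> j)) has_sum f w) UNIV"
      using TS by (simp add: T_def[abs_def] u_def)
  qed
qed


definition bt :: "real \<times> (complex^'n)" where "bt = (1, 0)"
definition bre :: "'n \<Rightarrow> real \<times> (complex^'n)" where "bre j = (0, axis j 1)"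
definition bim :: "'n \<Rightarrow> real \<times> (complex^'n)" where "bim j = (0, axis j \<i>)"

lemma basis_V: "(Basis :: (real \<times> (complex^'n::finite)) set) = insert bt (range bre \<union> range bim)"
  by (auto simp: Basis_prod_def Basis_vec_def Basis_complex_def bt_def bre_def bim_def)

lemma bt_in [simp]: "(bt :: real \<times> (complex^'n::finite)) \<in> Basis"
  by (simp add: basis_V)
lemma bre_in [simp]: "(bre j :: real \<times> (complex^'n::finite)) \<in> Basis"
  by (simp add: basis_V)
lemma bim_in [simp]: "(bim j :: real \<times> (complex^'n::finite)) \<in> Basis"
  by (simp add: basis_V)

lemma b_distinct [simp]:
  "bt \<noteq> bre j" "bre j \<noteq> bt" "bt \<noteq> bim j" "bim j \<noteq> bt" "bre j \<noteq> bim j'" "bim j' \<noteq> bre j"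
  "bre j = bre j' \<longleftrightarrow> j = j'" "bim j = bim j' \<longleftrightarrow> j = j'"
  by (auto simp: bt_def bre_def bim_def axis_eq_axis complex_eq_iff)

lemma inner_b [simp]:
  fixes d :: "real \<times> (complex^'n::finite)"
  shows "d \<bullet> bt = fst d" "d \<bullet> bre j = Re (snd d $ j)" "d \<bullet> bim j = Im (snd d $ j)"
  by (auto simp: bt_def bre_def bim_def inner_prod_def inner_axis)

definition phiI :: "((real \<times> (complex^'n)) \<Rightarrow> nat) \<Rightarrow> ('n option \<Rightarrow> nat) \<times> ('n \<Rightarrow> nat)" where
  "phiI \<alpha> = ((\<lambda>ox. case ox of None \<Rightarrow> \<alpha> bt | Some j \<Rightarrow> \<alpha> (bre j) + \<alpha> (bim j)), (\<lambda>j. \<alpha> (bre j)))"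

definition psiI :: "('n option \<Rightarrow> nat) \<times> ('n \<Rightarrow> nat) \<Rightarrow> (real \<times> (complex^'n)) \<Rightarrow> nat" where
  "psiI q b = (if b = bt then fst q None
     else if (\<exists>j. b = bre j) then snd q (THE j. b = bre j)
     else if (\<exists>j. b = bim j) then fst q (Some (THE j. b = bim j)) - snd q (THE j. b = bim j)
     else 0)"

lemma psiI_simps [simp]:
  "psiI q bt = fst q None"
  "psiI q (bre j) = snd q j"
  "psiI q (bim j) = fst q (Some j) - snd q j"
  by (auto simp: psiI_def)

lemma psiI_other: "b \<notin> (Basis :: (real \<times> (complex^'n::finite)) set) \<Longrightarrow> psiI q b = 0"
  by (auto simp: psiI_def)

definition PS :: "('n option \<Rightarrow> nat) \<Rightarrow> ('n \<Rightarrow> nat) set" where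
  "PS \<beta> = {p. \<forall>j. p j \<le> \<beta> (Some j)}"

lemma PS_PiE: "PS \<beta> = PiE UNIV (\<lambda>j. {..\<beta> (Some j)})"
  by (auto simp: PS_def PiE_def extensional_def)

lemma finite_PS [simp]: "finite (PS (\<beta> :: 'n::finite option \<Rightarrow> nat))"
  by (simp add: PS_PiE finite_PiE)

lemma phi_psi: "p \<in> PS \<beta> \<Longrightarrow> phiI (psiI (\<beta>, p)) = (\<beta>, p)"
  by (auto simp: phiI_def PS_def fun_eq_iff split: option.splits)

lemma psi_phi:
  assumes "\<alpha> \<in> multi_indices"
  shows "psiI (phiI (\<alpha> :: (real \<times> (complex^'n::finite)) \<Rightarrow> nat)) = \<alpha>"
proof
  fix b :: "real \<times> (complex^'n)"
  show "psiI (phiI \<alpha>) b = \<alpha> b"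
  proof (cases "b \<in> Basis")
    case True
    then consider "b = bt" | j where "b = bre j" | j where "b = bim j" by (auto simp: basis_V)
    then show ?thesis by cases (auto simp: phiI_def)
  next
    case False
    then show ?thesis using assms by (simp add: psiI_other multi_indices_def del: split_paired_All)
  qed
qed

lemma phi_in: "phiI \<alpha> \<in> Sigma UNIV PS"
  by (auto simp: phiI_def PS_def)

lemma psi_in: "psiI q \<in> (multi_indices :: ((real \<times> (complex^'n::finite)) \<Rightarrow> nat) set)"
  by (auto simp: multi_indices_def psiI_other)

definition monoR :: "'a::euclidean_space \<Rightarrow> ('a \<Rightarrow> nat) \<Rightarrow> real" where
  "monoR d \<alpha> = (\<Prod>b\<in>Basis. (d \<bullet> b) ^ \<alpha> b)"

lemma prod_basis_V:
  fixes g :: "real \<times> (complex^'n::finite) \<Rightarrow> 'a::comm_monoid_mult"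
  shows "(\<Prod>b\<in>Basis. g b) = g bt * ((\<Prod>j\<in>UNIV. g (bre j)) * (\<Prod>j\<in>UNIV. g (bim j)))"
proof -
  have "(\<Prod>b\<in>Basis. g b) = g bt * (\<Prod>b\<in>range bre \<union> range bim. g b)"
    unfolding basis_V by (subst prod.insert) auto
  also have "(\<Prod>b\<in>range bre \<union> range bim. g b) = (\<Prod>b\<in>range bre. g b) * (\<Prod>b\<in>range bim. g b)"
    by (rule prod.union_disjoint) auto
  also have "(\<Prod>b\<in>range bre. g b) = (\<Prod>j\<in>UNIV. g (bre j))"
    by (subst prod.reindex) (auto simp: inj_on_def)
  also have "(\<Prod>b\<in>range bim. g b) = (\<Prod>j\<in>UNIV. g (bim j))"
    by (subst prod.reindex) (auto simp: inj_on_def)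
  finally show ?thesis .
qed

lemma monoR_psi:
  fixes d :: "real \<times> (complex^'n::finite)"
  shows "monoR d (psiI (\<beta>, p)) = fst d ^ \<beta> None *
     (\<Prod>j\<in>UNIV. Re (snd d $ j) ^ p j * Im (snd d $ j) ^ (\<beta> (Some j) - p j))"
  unfolding monoR_def prod_basis_V by (simp add: prod.distrib)


definition Emap :: "real \<times> (complex^'n) \<Rightarrow> complex^('n option)" where
  "Emap y = (\<chi> ox. case ox of None \<Rightarrow> complex_of_real (fst y) | Some j \<Rightarrow> snd y $ j)"

lemma Emap_nth [simp]: "Emap y $ None = complex_of_real (fst y)" "Emap y $ Some j = snd y $ j"
  by (simp_all add: Emap_def)

lemma prod_option_UNIV:
  fixes g :: "'n::finite option \<Rightarrow> 'a::comm_monoid_mult"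
  shows "(\<Prod>ox\<in>UNIV. g ox) = g None * (\<Prod>j\<in>UNIV. g (Some j))"
  by (simp add: UNIV_option_conv prod.reindex)

lemma sum_option_UNIV:
  fixes g :: "'n::finite option \<Rightarrow> 'a::comm_monoid_add"
  shows "(\<Sum>ox\<in>UNIV. g ox) = g None + (\<Sum>j\<in>UNIV. g (Some j))"
  by (simp add: UNIV_option_conv sum.reindex)

lemma binom_PS:
  fixes a b :: "'n::finite \<Rightarrow> 'a::comm_semiring_1"
  shows "(\<Sum>p\<in>PS \<beta>. \<Prod>j\<in>UNIV. of_nat (\<beta> (Some j) choose p j) * a j ^ p j * b j ^ (\<beta> (Some j) - p j))
     = (\<Prod>j\<in>UNIV. (a j + b j) ^ \<beta> (Some j))"
proof -
  have "(\<Sum>p\<in>PS \<beta>. \<Prod>j\<in>UNIV. of_nat (\<beta> (Some j) choose p j) * a j ^ p j * b j ^ (\<beta> (Some j) - p j))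
      = (\<Prod>j\<in>UNIV. \<Sum>k\<in>{..\<beta> (Some j)}. of_nat (\<beta> (Some j) choose k) * a j ^ k * b j ^ (\<beta> (Some j) - k))"
    unfolding PS_PiE by (rule prod_sum_PiE[symmetric]) auto
  also have "\<dots> = (\<Prod>j\<in>UNIV. (a j + b j) ^ \<beta> (Some j))"
    by (simp add: binomial_ring)
  finally show ?thesis .
qed

lemma conv_real:
  fixes c :: "('n::finite option \<Rightarrow> nat) \<Rightarrow> complex" and f :: "complex^('n option) \<Rightarrow> complex"
    and x0 :: "real \<times> (complex^'n)"
  assumes \<rho>: "\<rho> > 0" and cb: "\<And>\<beta>. cmod (c \<beta>) \<le> K / \<rho> ^ (\<Sum>ox\<in>UNIV. \<beta> ox)"
    and hs: "\<And>w. (\<forall>ox. cmod (w$ox - Emap x0 $ ox) < \<rho>) \<Longrightarrow>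
       ((\<lambda>\<beta>. c \<beta> * (\<Prod>ox\<in>UNIV. (w$ox - Emap x0 $ ox) ^ \<beta> ox)) has_sum f w) UNIV"
  shows "\<exists>C. \<forall>y\<in>ball x0 (\<rho>/3). ((\<lambda>\<alpha>. monoR (y - x0) \<alpha> *\<^sub>R C \<alpha>) has_sum f (Emap y)) multi_indices"
proof -
  define Cbp where "Cbp q = c (fst q) * (\<Prod>j\<in>UNIV. of_nat (fst q (Some j) choose snd q j) * \<i> ^ (fst q (Some j) - snd q j))"
    for q :: "('n option \<Rightarrow> nat) \<times> ('n \<Rightarrow> nat)"
  define C where "C \<alpha> = Cbp (phiI \<alpha>)" for \<alpha> :: "real \<times> (complex^'n) \<Rightarrow> nat"
  have "cmod (c (\<lambda>_. 0)) \<le> K" using cb[of "\<lambda>_. 0"] by simp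
  then have K0: "0 \<le> K" by (meson norm_ge_zero order_trans)
  show ?thesis
  proof (intro exI[of _ C] ballI)
    fix y assume y: "y \<in> ball x0 (\<rho>/3)"
    define d where "d = y - x0"
    have nd: "norm d < \<rho>/3" using y by (simp add: d_def dist_norm norm_minus_commute)
    define H where "H q = monoR d (psiI q) *\<^sub>R Cbp q" for q
    define u where "u ox = (Emap y - Emap x0) $ ox" for ox
    have uN: "u None = complex_of_real (fst d)" by (simp add: u_def d_def)
    have uS: "u (Some j) = complex_of_real (Re (snd d $ j)) + \<i> * complex_of_real (Im (snd d $ j))" for j
      by (simp add: u_def d_def complex_eq_iff)
    have dt: "\<bar>fst d\<bar> \<le> norm d"
      using Basis_le_norm[OF bt_in, of d] by simp
    have dz: "\<bar>Re (snd d $ j)\<bar> + \<bar>Im (snd d $ j)\<bar> \<le> 2 * norm d" for j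
    proof -
      have "\<bar>Re (snd d $ j)\<bar> \<le> norm d" using Basis_le_norm[OF bre_in, of d j] by simp
      moreover have "\<bar>Im (snd d $ j)\<bar> \<le> norm d" using Basis_le_norm[OF bim_in, of d j] by simp
      ultimately show ?thesis by simp
    qed
    have cu: "cmod (u ox) < \<rho>" for ox
    proof (cases ox)
      case None then show ?thesis using dt nd by (simp add: uN)
    next
      case (Some j)
      have "cmod (u ox) \<le> \<bar>Re (snd d $ j)\<bar> + \<bar>Im (snd d $ j)\<bar>"
        using Some cmod_le[of "u ox"] by (simp add: u_def d_def)
      then show ?thesis using dz[of j] nd \<rho> by simp
    qed
    have outer: "((\<lambda>\<beta>. c \<beta> * (\<Prod>ox\<in>UNIV. u ox ^ \<beta> ox)) has_sum f (Emap y)) UNIV"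
      using hs[of "Emap y"] cu by (simp add: u_def)
    have Hexp: "H (\<beta>, p) = c \<beta> * complex_of_real (fst d) ^ \<beta> None *
        (\<Prod>j\<in>UNIV. of_nat (\<beta> (Some j) choose p j) * complex_of_real (Re (snd d $ j)) ^ p j *
           (\<i> * complex_of_real (Im (snd d $ j))) ^ (\<beta> (Some j) - p j))" for \<beta> p
      by (simp add: H_def Cbp_def monoR_psi scaleR_conv_of_real of_real_prod power_mult_distrib
          prod.distrib[symmetric] mult_ac)
    have inner: "((\<lambda>p. H (\<beta>, p)) has_sum (c \<beta> * (\<Prod>ox\<in>UNIV. u ox ^ \<beta> ox))) (PS \<beta>)" for \<beta>
    proof (rule has_sum_finiteI[OF finite_PS])
      have "(\<Sum>p\<in>PS \<beta>. H (\<beta>, p)) = c \<beta> * complex_of_real (fst d) ^ \<beta> None *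
          (\<Sum>p\<in>PS \<beta>. \<Prod>j\<in>UNIV. of_nat (\<beta> (Some j) choose p j) * complex_of_real (Re (snd d $ j)) ^ p j *
           (\<i> * complex_of_real (Im (snd d $ j))) ^ (\<beta> (Some j) - p j))"
        by (simp add: Hexp sum_distrib_left)
      also have "\<dots> = c \<beta> * (\<Prod>ox\<in>UNIV. u ox ^ \<beta> ox)"
        using binom_PS[of \<beta> "\<lambda>j. complex_of_real (Re (snd d $ j))" "\<lambda>j. \<i> * complex_of_real (Im (snd d $ j))"]
        by (simp add: prod_option_UNIV uN uS)
      finally show "c \<beta> * (\<Prod>ox\<in>UNIV. u ox ^ \<beta> ox) = (\<Sum>p\<in>PS \<beta>. H (\<beta>, p))" by simp
    qed
    have Hnorm: "(\<Sum>p\<in>PS \<beta>. norm (H (\<beta>, p))) =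
        cmod (c \<beta>) * \<bar>fst d\<bar> ^ \<beta> None * (\<Prod>j\<in>UNIV. (\<bar>Re (snd d $ j)\<bar> + \<bar>Im (snd d $ j)\<bar>) ^ \<beta> (Some j))" for \<beta>
    proof -
      have "norm (H (\<beta>, p)) = cmod (c \<beta>) * \<bar>fst d\<bar> ^ \<beta> None *
          (\<Prod>j\<in>UNIV. of_nat (\<beta> (Some j) choose p j) * \<bar>Re (snd d $ j)\<bar> ^ p j * \<bar>Im (snd d $ j)\<bar> ^ (\<beta> (Some j) - p j))" for p
        by (simp add: Hexp norm_mult prod_norm[symmetric] norm_power)
      then have "(\<Sum>p\<in>PS \<beta>. norm (H (\<beta>, p))) = cmod (c \<beta>) * \<bar>fst d\<bar> ^ \<beta> None *
          (\<Sum>p\<in>PS \<beta>. \<Prod>j\<in>UNIV. of_nat (\<beta> (Some j) choose p j) * \<bar>Re (snd d $ j)\<bar> ^ p j * \<bar>Im (snd d $ j)\<bar> ^ (\<beta> (Some j) - p j))"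
        by (simp add: sum_distrib_left)
      also have "\<dots> = cmod (c \<beta>) * \<bar>fst d\<bar> ^ \<beta> None * (\<Prod>j\<in>UNIV. (\<bar>Re (snd d $ j)\<bar> + \<bar>Im (snd d $ j)\<bar>) ^ \<beta> (Some j))"
        using binom_PS[of \<beta> "\<lambda>j. \<bar>Re (snd d $ j)\<bar>" "\<lambda>j. \<bar>Im (snd d $ j)\<bar>"] by simp
      finally show ?thesis .
    qed
    define q where "q ox = (case ox of None \<Rightarrow> \<bar>fst d\<bar> | Some j \<Rightarrow> \<bar>Re (snd d $ j)\<bar> + \<bar>Im (snd d $ j)\<bar>) / \<rho>" for ox
    have q: "0 \<le> q ox" "q ox < 1" for ox
    proof -
      have "(case ox of None \<Rightarrow> \<bar>fst d\<bar> | Some j \<Rightarrow> \<bar>Re (snd d $ j)\<bar> + \<bar>Im (snd d $ j)\<bar>) < \<rho>"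
      proof (cases ox)
        case None then show ?thesis using dt nd norm_ge_zero[of d] by simp
      next
        case (Some j)
        have "\<bar>Re (snd d $ j)\<bar> + \<bar>Im (snd d $ j)\<bar> < \<rho>" using dz[of j] nd norm_ge_zero[of d] by linarith
        then show ?thesis using Some by simp
      qed
      then show "q ox < 1" using \<rho> by (simp add: q_def)
      show "0 \<le> q ox" using \<rho> by (cases ox) (auto simp: q_def)
    qed
    have Hb: "norm (\<Sum>p\<in>PS \<beta>. norm (H (\<beta>, p))) \<le> K * (\<Prod>ox\<in>UNIV. q ox ^ \<beta> ox)" for \<beta>
    proof -
      have "norm (\<Sum>p\<in>PS \<beta>. norm (H (\<beta>, p))) = (\<Sum>p\<in>PS \<beta>. norm (H (\<beta>, p)))"
        by (simp add: sum_nonneg)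
      also have "\<dots> = cmod (c \<beta>) * (\<Prod>ox\<in>UNIV. (q ox * \<rho>) ^ \<beta> ox)"
        using \<rho> by (simp add: Hnorm prod_option_UNIV q_def mult.assoc)
      also have "\<dots> = cmod (c \<beta>) * \<rho> ^ (\<Sum>ox\<in>UNIV. \<beta> ox) * (\<Prod>ox\<in>UNIV. q ox ^ \<beta> ox)"
        by (simp add: power_mult_distrib prod.distrib power_sum)
      also have "\<dots> \<le> K / \<rho> ^ (\<Sum>ox\<in>UNIV. \<beta> ox) * \<rho> ^ (\<Sum>ox\<in>UNIV. \<beta> ox) * (\<Prod>ox\<in>UNIV. q ox ^ \<beta> ox)"
        using q \<rho> by (intro mult_right_mono cb prod_nonneg) auto
      also have "\<dots> = K * (\<Prod>ox\<in>UNIV. q ox ^ \<beta> ox)" using \<rho> by simp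
      finally show ?thesis .
    qed
    have "(\<lambda>\<beta>. K * (\<Prod>ox\<in>UNIV. q ox ^ \<beta> ox)) summable_on UNIV"
      using q by (intro summable_on_cmult_right multigeo_summable) auto
    then have sb: "(\<lambda>\<beta>. norm (\<Sum>p\<in>PS \<beta>. norm (H (\<beta>, p)))) summable_on UNIV"
      by (rule Infinite_Sum.abs_summable_on_comparison_test') (rule Hb)
    have "(\<lambda>x. norm (H x)) summable_on Sigma UNIV PS"
      unfolding Infinite_Sum.abs_summable_on_Sigma_iff
      using sb by (simp add: infsum_finite)
    then have Hs: "H summable_on Sigma UNIV PS" by (rule abs_summable_summable)
    have HS: "(H has_sum f (Emap y)) (Sigma UNIV PS)"
      by (rule has_sum_SigmaI[OF inner outer Hs])
    have "((\<lambda>\<alpha>. monoR d \<alpha> *\<^sub>R C \<alpha>) has_sum f (Emap y)) multi_indices = (H has_sum f (Emap y)) (Sigma UNIV PS)"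
      by (rule has_sum_reindex_bij_witness[where j=phiI and i=psiI])
         (auto simp: psi_phi phi_in phi_psi psi_in H_def C_def)
    with HS show "((\<lambda>\<alpha>. monoR (y - x0) \<alpha> *\<^sub>R C \<alpha>) has_sum f (Emap y)) multi_indices"
      by (simp add: d_def)
  qed
qed


lemma has_sum_vec:
  fixes f :: "'a \<Rightarrow> complex^'n"
  assumes "\<And>i. ((\<lambda>x. f x $ i) has_sum s $ i) A"
  shows "(f has_sum s) A"
proof -
  have "((\<lambda>X. \<chi> i. sum (\<lambda>x. f x $ i) X) \<longlongrightarrow> (\<chi> i. s $ i)) (finite_subsets_at_top A)"
    using assms unfolding has_sum_def by (intro tendsto_vec_lambda) auto
  moreover have "(\<lambda>X. \<chi> i. sum (\<lambda>x. f x $ i) X) = sum f"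
    by (auto simp: vec_eq_iff fun_eq_iff)
  ultimately show ?thesis unfolding has_sum_def by simp
qed

lemma bl_smult_left: "bounded_linear (\<lambda>h::complex. h *s (v::complex^'n))"
proof -
  have "linear (\<lambda>h::complex. h *s v)"
    by (rule linearI) (auto simp: vec_eq_iff algebra_simps scalar_mult_eq_scaleR)
  then show ?thesis by (simp add: linear_conv_bounded_linear)
qed

lemma holo_line:
  fixes G :: "complex^'n \<Rightarrow> complex^'m"
  assumes S: "open S"
    and der: "\<And>\<eta>. \<eta> \<in> S \<Longrightarrow> \<exists>L. (G has_derivative L) (at (p + \<eta> *s v)) \<and> (\<forall>c x. L (c *s x) = c *s L x)"
  shows "(\<lambda>\<eta>. G (p + \<eta> *s v) $ i) holomorphic_on S"
  unfolding holomorphic_on_open[OF S]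
proof
  fix \<eta> assume "\<eta> \<in> S"
  then obtain L where L: "(G has_derivative L) (at (p + \<eta> *s v))" and hom: "\<forall>c x. L (c *s x) = c *s L x"
    using der by blast
  have g: "((\<lambda>\<eta>. p + \<eta> *s v) has_derivative (\<lambda>h. h *s v)) (at \<eta>)"
    using bl_smult_left[of v] by (intro derivative_eq_intros) (auto simp: bounded_linear_imp_has_derivative)
  have "((G \<circ> (\<lambda>\<eta>. p + \<eta> *s v)) has_derivative (L \<circ> (\<lambda>h. h *s v))) (at \<eta>)"
    by (rule diff_chain_at[OF g L])
  then have "((\<lambda>\<eta>. G (p + \<eta> *s v) $ i) has_derivative (\<lambda>h. (L (h *s v)) $ i)) (at \<eta>)"
    using bounded_linear.has_derivative[OF bounded_linear_vec_nth] by (auto simp: o_def)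
  then have "((\<lambda>\<eta>. G (p + \<eta> *s v) $ i) has_derivative (*) (L v $ i)) (at \<eta>)"
    by (rule has_derivative_eq_rhs) (auto simp: hom fun_eq_iff mult.commute)
  then show "\<exists>f'. ((\<lambda>\<eta>. G (p + \<eta> *s v) $ i) has_field_derivative f') (at \<eta>)"
    by (auto simp: has_field_derivative_def)
qed

lemma line_deriv:
  fixes G :: "complex^'n \<Rightarrow> complex^'m"
  assumes L: "(G has_derivative L) (at (p + \<eta> *s v))" and hom: "\<forall>c x. L (c *s x) = c *s L x"
  shows "((\<lambda>\<eta>. G (p + \<eta> *s v) $ i) has_field_derivative (L v $ i)) (at \<eta>)"
proof -
  have g: "((\<lambda>\<eta>. p + \<eta> *s v) has_derivative (\<lambda>h. h *s v)) (at \<eta>)"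
    using bl_smult_left[of v] by (intro derivative_eq_intros) (auto simp: bounded_linear_imp_has_derivative)
  have "((G \<circ> (\<lambda>\<eta>. p + \<eta> *s v)) has_derivative (L \<circ> (\<lambda>h. h *s v))) (at \<eta>)"
    by (rule diff_chain_at[OF g L])
  then have "((\<lambda>\<eta>. G (p + \<eta> *s v) $ i) has_derivative (\<lambda>h. (L (h *s v)) $ i)) (at \<eta>)"
    using bounded_linear.has_derivative[OF bounded_linear_vec_nth] by (auto simp: o_def)
  then have "((\<lambda>\<eta>. G (p + \<eta> *s v) $ i) has_derivative (*) (L v $ i)) (at \<eta>)"
    by (rule has_derivative_eq_rhs) (auto simp: hom fun_eq_iff mult.commute)
  then show ?thesis by (simp add: has_field_derivative_def)
qed

lemma smult_vm: "(s *s z) v* A = s *s (z v* (A :: complex^'n^'m))"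
  by (simp add: vec_eq_iff vector_matrix_mult_def sum_distrib_left mult_ac)

lemma linear_form_hom: "linear_form A (c *s x) = c *s linear_form A x"
  by (simp add: linear_form_def smult_vm)

lemma linear_form_add: "linear_form A (x + y) = linear_form A x + linear_form A y"
  by (simp add: linear_form_def vec_eq_iff vector_matrix_mult_def sum.distrib algebra_simps)

lemma norm_smult_cvec: "norm (c *s (x :: complex^'n)) = cmod c * norm x"
proof -
  have "norm (c *s x) = L2_set (\<lambda>i. cmod c * norm (x $ i)) UNIV"
    by (simp add: norm_vec_def norm_mult)
  also have "\<dots> = cmod c * norm x"
    by (simp add: norm_vec_def L2_set_right_distrib)
  finally show ?thesis .
qed

definition Phi :: "(complex^'n \<Rightarrow> complex^'n) \<Rightarrow> complex^'n^'n \<Rightarrow> complex \<Rightarrow> complex^'n \<Rightarrow> complex^'n" where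
  "Phi \<Omega> A s z = (if s = 0 then z v* A else inverse s *s \<Omega> (s *s z))"

definition zpart :: "complex^('n option) \<Rightarrow> complex^'n" where
  "zpart w = (\<chi> j. w $ Some j)"

definition Psi :: "(complex^'n \<Rightarrow> complex^'n) \<Rightarrow> complex^'n^'n \<Rightarrow> complex^('n option) \<Rightarrow> complex^'n" where
  "Psi \<Omega> A w = Phi \<Omega> A (w $ None) (zpart w)"

lemma zpart_Emap [simp]: "zpart (Emap (t, z)) = z"
  by (simp add: zpart_def vec_eq_iff)

lemma of_real_smult: "complex_of_real t *s (z :: complex^'n) = t *\<^sub>R z"
  by (simp add: vec_eq_iff) (simp add: scaleR_conv_of_real)

lemma Psi_Emap: "Psi \<Omega> A (Emap (t, z)) = rescaled_form \<Omega> A t z"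
  by (simp add: Psi_def Phi_def rescaled_form_def linear_form_def of_real_smult
      flip: of_real_inverse)

lemma continuous_on_zpart [continuous_intros]: "continuous_on S zpart"
  unfolding zpart_def
  by (intro continuous_on_vec_lambda bounded_linear.continuous_on[OF bounded_linear_vec_nth] continuous_on_id)

lemma continuous_on_smult [continuous_intros]:
  fixes f :: "'a::topological_space \<Rightarrow> complex" and g :: "'a \<Rightarrow> complex^'n"
  assumes "continuous_on S f" "continuous_on S g"
  shows "continuous_on S (\<lambda>x. f x *s g x)"
  unfolding vector_scalar_mult_def
  by (intro continuous_on_vec_lambda continuous_intros assms
      bounded_linear.continuous_on[OF bounded_linear_vec_nth])

lemma zpart_vupd_Some: "zpart (vupd w (Some j) \<zeta>) = zpart (vupd w (Some j) 0) + \<zeta> *s axis j 1"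
  by (simp add: zpart_def vec_eq_iff axis_def)

lemma psi_holo_some:
  fixes \<Omega> :: "complex^'n \<Rightarrow> complex^'n"
  assumes holo: "holomorphic_several (ball 0 r) \<Omega>"
    and linpart: "(\<Omega> has_derivative linear_form A) (at 0)"
    and T: "open T" and inT: "\<And>\<zeta>. \<zeta> \<in> T \<Longrightarrow> (w $ None) *s zpart (vupd w (Some j) \<zeta>) \<in> ball 0 r"
  shows "(\<lambda>\<zeta>. Psi \<Omega> A (vupd w (Some j) \<zeta>) $ i) holomorphic_on T"
proof -
  define p where "p = zpart (vupd w (Some j) 0)"
  define v :: "complex^'n" where "v = axis j 1"
  define s where "s = w $ None"
  have zp: "zpart (vupd w (Some j) \<zeta>) = p + \<zeta> *s v" for \<zeta>
    unfolding p_def v_def by (rule zpart_vupd_Some)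
  have bl: "bounded_linear (linear_form A)" using linpart by (rule has_derivative_bounded_linear)
  show ?thesis
  proof (cases "s = 0")
    case True
    have "(\<lambda>\<zeta>. linear_form A (p + \<zeta> *s v) $ i) holomorphic_on T"
    proof (rule holo_line[OF T])
      fix \<eta> show "\<exists>L. (linear_form A has_derivative L) (at (p + \<eta> *s v)) \<and> (\<forall>c x. L (c *s x) = c *s L x)"
        using bl by (intro exI[of _ "linear_form A"]) (auto simp: bounded_linear_imp_has_derivative linear_form_hom)
    qed
    then show ?thesis using True by (simp add: Psi_def Phi_def s_def zp linear_form_def)
  next
    case False
    have "(\<lambda>\<zeta>. \<Omega> (s *s p + \<zeta> *s (s *s v)) $ i) holomorphic_on T"
    proof (rule holo_line[OF T])
      fix \<eta> assume "\<eta> \<in> T"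
      then have "s *s p + \<eta> *s (s *s v) \<in> ball 0 r"
        using inT[of \<eta>] by (simp add: zp s_def vector_add_ldistrib vector_smult_assoc mult.commute)
      then show "\<exists>L. (\<Omega> has_derivative L) (at (s *s p + \<eta> *s (s *s v))) \<and> (\<forall>c x. L (c *s x) = c *s L x)"
        using holo unfolding holomorphic_several_def by blast
    qed
    then have "(\<lambda>\<zeta>. inverse s * \<Omega> (s *s p + \<zeta> *s (s *s v)) $ i) holomorphic_on T"
      by (intro holomorphic_intros)
    moreover have "s *s (p + \<zeta> *s v) = s *s p + \<zeta> *s (s *s v)" for \<zeta>
      by (simp add: vector_add_ldistrib vector_smult_assoc mult.commute)
    ultimately show ?thesis using False by (simp add: Psi_def Phi_def s_def zp mult.commute)
  qed
qed

lemma zpart_vupd_None [simp]: "zpart (vupd w None \<zeta>) = zpart w"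
  by (simp add: zpart_def vec_eq_iff)

lemma vupd_None_nth [simp]: "vupd w None \<zeta> $ None = \<zeta>" by simp

lemma open_Tz: "open {\<zeta>::complex. norm (\<zeta> *s z) < r}"
  by (rule open_Collect_less) (intro continuous_intros)+

lemma psi_holo_none:
  fixes \<Omega> :: "complex^'n \<Rightarrow> complex^'n"
  assumes holo: "holomorphic_several (ball 0 r) \<Omega>"
    and linpart: "(\<Omega> has_derivative linear_form A) (at 0)"
    and \<Omega>0: "\<Omega> 0 = 0" and r: "r > 0"
    and T: "open T" and inT: "\<And>\<zeta>. \<zeta> \<in> T \<Longrightarrow> norm (\<zeta> *s zpart w) < r"
  shows "(\<lambda>\<zeta>. Psi \<Omega> A (vupd w None \<zeta>) $ i) holomorphic_on T"
proof -
  define z where "z = zpart w"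
  define Tz where "Tz = {\<zeta>::complex. norm (\<zeta> *s z) < r}"
  have oTz: "open Tz" unfolding Tz_def by (rule open_Tz)
  define h where "h \<zeta> = \<Omega> (0 + \<zeta> *s z) $ i" for \<zeta>
  have hol_h: "h holomorphic_on Tz"
    unfolding h_def
  proof (rule holo_line[OF oTz])
    fix \<eta> assume "\<eta> \<in> Tz"
    then have "0 + \<eta> *s z \<in> ball 0 r" by (simp add: Tz_def)
    then show "\<exists>L. (\<Omega> has_derivative L) (at (0 + \<eta> *s z)) \<and> (\<forall>c x. L (c *s x) = c *s L x)"
      using holo unfolding holomorphic_several_def by blast
  qed
  have "0 \<in> Tz" using r by (simp add: Tz_def)
  then have z0: "0 \<in> interior Tz" using oTz by (simp add: interior_open)
  have dh: "deriv h 0 = linear_form A z $ i"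
  proof (rule DERIV_imp_deriv)
    show "(h has_field_derivative linear_form A z $ i) (at 0)"
      unfolding h_def
      by (rule line_deriv) (use linpart in \<open>auto simp: linear_form_hom\<close>)
  qed
  have h0: "h 0 = 0" by (simp add: h_def \<Omega>0)
  have "(\<lambda>\<zeta>. if \<zeta> = 0 then deriv h 0 else (h \<zeta> - h 0) / (\<zeta> - 0)) holomorphic_on Tz"
    by (rule pole_lemma[OF hol_h z0])
  then have "(\<lambda>\<zeta>. if \<zeta> = 0 then deriv h 0 else (h \<zeta> - h 0) / (\<zeta> - 0)) holomorphic_on T"
    by (rule holomorphic_on_subset) (use inT in \<open>auto simp: Tz_def z_def\<close>)
  then show ?thesis
    by (rule holomorphic_transform)
       (simp add: Psi_def Phi_def dh h0 h_def z_def linear_form_def divide_inverse mult.commute \<Omega>0)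
qed

lemma psi_cont:
  fixes \<Omega> :: "complex^'n \<Rightarrow> complex^'n"
  assumes holo: "holomorphic_several (ball 0 r) \<Omega>"
    and linpart: "(\<Omega> has_derivative linear_form A) (at 0)"
    and \<Omega>0: "\<Omega> 0 = 0"
  shows "continuous_on {w. norm ((w $ None) *s zpart w) < r} (Psi \<Omega> A)"
proof (rule continuous_at_imp_continuous_on, rule ballI)
  fix w0 :: "complex^('n option)" assume w0: "w0 \<in> {w. norm ((w $ None) *s zpart w) < r}"
  have Oc: "continuous_on (ball 0 r) \<Omega>"
  proof (rule continuous_at_imp_continuous_on, rule ballI)
    fix x assume "x \<in> ball (0::complex^'n) r"
    then obtain L where "(\<Omega> has_derivative L) (at x)" using holo unfolding holomorphic_several_def by blast
    then show "isCont \<Omega> x" by (rule has_derivative_continuous)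
  qed
  have bl: "bounded_linear (linear_form A)" using linpart by (rule has_derivative_bounded_linear)
  show "isCont (Psi \<Omega> A) w0"
  proof (cases "w0 $ None = 0")
    case False
    define D1 where "D1 = {w :: complex^('n option). w $ None \<noteq> 0} \<inter> {w. norm ((w $ None) *s zpart w) < r}"
    have oD1: "open D1" unfolding D1_def
      by (intro open_Int open_Collect_neq open_Collect_less continuous_intros
          bounded_linear.continuous_on[OF bounded_linear_vec_nth])
    have "continuous_on D1 (\<lambda>w. inverse (w $ None) *s \<Omega> ((w $ None) *s zpart w))"
    proof (intro continuous_intros bounded_linear.continuous_on[OF bounded_linear_vec_nth])
      show "continuous_on D1 (\<lambda>w. \<Omega> ((w $ None) *s zpart w))"
        by (rule continuous_on_compose2[OF Oc])
           (auto simp: D1_def intro!: continuous_intros bounded_linear.continuous_on[OF bounded_linear_vec_nth])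
    qed (auto simp: D1_def)
    then have "continuous_on D1 (Psi \<Omega> A)"
      by (rule continuous_on_cong[THEN iffD1, rotated 2]) (auto simp: D1_def Psi_def Phi_def)
    moreover have "w0 \<in> D1" using False w0 by (simp add: D1_def)
    ultimately show ?thesis using oD1 continuous_on_eq_continuous_at by blast
  next
    case True
    define E where "E p = norm (\<Omega> p - linear_form A p) / norm p" for p :: "complex^'n"
    have E0: "(E \<longlongrightarrow> 0) (at 0)"
    proof -
      have *: "\<forall>e>0. \<exists>d>0. \<forall>x'. 0 < norm (x' - 0) \<and> norm (x' - 0) < d \<longrightarrow>
          norm (\<Omega> x' - \<Omega> 0 - linear_form A (x' - 0)) / norm (x' - 0) < e"
        using linpart unfolding has_derivative_at' by blast
      show ?thesis unfolding LIM_eq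
      proof (intro allI impI)
        fix e :: real assume "e > 0"
        then obtain d where "d > 0" and d: "\<And>x'. 0 < norm x' \<and> norm x' < d \<Longrightarrow>
            norm (\<Omega> x' - \<Omega> 0 - linear_form A x') / norm x' < e" using * by auto
        then show "\<exists>s>0. \<forall>x. x \<noteq> 0 \<and> norm (x - 0) < s \<longrightarrow> norm (E x - 0) < e"
          by (intro exI[of _ d]) (auto simp: E_def \<Omega>0)
      qed
    qed
    have Ec: "isCont E 0" using E0 by (simp add: isCont_def E_def)
    have bnd: "norm (Psi \<Omega> A w - linear_form A (zpart w)) \<le> E ((w $ None) *s zpart w) * norm (zpart w)" for w
    proof -
      define s where "s = w $ None"
      define z where "z = zpart w"
      have E_nn: "0 \<le> E p" for p by (simp add: E_def)
      consider "s = 0" | "s \<noteq> 0" "z = 0" | "s \<noteq> 0" "z \<noteq> 0" by blast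
      then have "norm (Phi \<Omega> A s z - linear_form A z) \<le> E (s *s z) * norm z"
      proof cases
        case 1 then show ?thesis by (simp add: Phi_def linear_form_def E_nn)
      next
        case 2
        have "linear_form A 0 = 0" by (simp add: linear_form_def)
        with 2 show ?thesis by (simp add: Phi_def \<Omega>0)
      next
        case 3
        have p0: "s *s z \<noteq> 0" using 3 by (simp add: vec_eq_iff)
        have "Phi \<Omega> A s z - linear_form A z = inverse s *s (\<Omega> (s *s z) - linear_form A (s *s z))"
          using 3 by (simp add: Phi_def linear_form_hom vector_ssub_ldistrib vector_smult_assoc)
        then have "norm (Phi \<Omega> A s z - linear_form A z) = cmod (inverse s) * norm (\<Omega> (s *s z) - linear_form A (s *s z))"
          by (simp only: norm_smult_cvec)
        also have "\<dots> = cmod (inverse s) * (E (s *s z) * norm (s *s z))"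
          using p0 by (simp add: E_def)
        also have "\<dots> = E (s *s z) * norm z"
          using 3 by (simp add: norm_smult_cvec norm_inverse field_simps norm_divide)
        finally show ?thesis by simp
      qed
      then show ?thesis by (simp add: Psi_def s_def z_def linear_form_def)
    qed
    have lim1: "((\<lambda>w. (w $ None) *s zpart w) \<longlongrightarrow> 0) (at w0)"
    proof -
      have "continuous_on UNIV (\<lambda>w. (w $ None) *s zpart w)"
        by (intro continuous_intros bounded_linear.continuous_on[OF bounded_linear_vec_nth])
      then have "((\<lambda>w. (w $ None) *s zpart w) \<longlongrightarrow> (w0 $ None) *s zpart w0) (at w0)"
        by (auto simp: continuous_on_eq_continuous_at isCont_def)
      then show ?thesis using True by simp
    qed
    have lim2: "((\<lambda>w. E ((w $ None) *s zpart w) * norm (zpart w)) \<longlongrightarrow> 0 * norm (zpart w0)) (at w0)"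
    proof (intro tendsto_mult)
      show "((\<lambda>w. E ((w $ None) *s zpart w)) \<longlongrightarrow> 0) (at w0)"
        using isCont_tendsto_compose[OF Ec lim1] by (simp add: E_def)
      have "continuous_on UNIV zpart" by (rule continuous_on_zpart)
      then have "(zpart \<longlongrightarrow> zpart w0) (at w0)"
        by (auto simp: continuous_on_eq_continuous_at isCont_def)
      then show "((\<lambda>w. norm (zpart w)) \<longlongrightarrow> norm (zpart w0)) (at w0)" by (rule tendsto_norm)
    qed
    have lim3: "((\<lambda>w. Psi \<Omega> A w - linear_form A (zpart w)) \<longlongrightarrow> 0) (at w0)"
      by (rule Lim_null_comparison[OF _ lim2[simplified]]) (simp add: bnd)
    have lim4: "((\<lambda>w. linear_form A (zpart w)) \<longlongrightarrow> linear_form A (zpart w0)) (at w0)"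
    proof -
      have "continuous_on UNIV (\<lambda>w. linear_form A (zpart w))"
        by (intro bounded_linear.continuous_on[OF bl] continuous_intros)
      then show ?thesis by (auto simp: continuous_on_eq_continuous_at isCont_def)
    qed
    have "((\<lambda>w. (Psi \<Omega> A w - linear_form A (zpart w)) + linear_form A (zpart w)) \<longlongrightarrow> 0 + linear_form A (zpart w0)) (at w0)"
      by (rule tendsto_add[OF lim3 lim4])
    moreover have "Psi \<Omega> A w0 = linear_form A (zpart w0)"
      using True by (simp add: Psi_def Phi_def linear_form_def)
    ultimately show ?thesis by (simp add: isCont_def)
  qed
qed


lemma osgood:
  fixes f :: "complex^'k::finite \<Rightarrow> complex" and a :: "complex^'k"
  assumes \<rho>: "\<rho> > 0" and cont: "continuous_on (pcb a \<rho>) f"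
    and hol: "\<And>w j. w \<in> pcb a \<rho> \<Longrightarrow> (\<lambda>\<zeta>. f (vupd w j \<zeta>)) holomorphic_on ball (a$j) \<rho>"
    and bnd: "\<And>w. w \<in> pcb a \<rho> \<Longrightarrow> cmod (f w) \<le> M"
  shows "\<exists>c. (\<forall>\<beta>. cmod (c \<beta>) \<le> M / \<rho> ^ (\<Sum>j\<in>UNIV. \<beta> j)) \<and>
        (\<forall>w. (\<forall>j. cmod (w$j - a$j) < \<rho>) \<longrightarrow>
           ((\<lambda>\<beta>. c \<beta> * (\<Prod>j\<in>UNIV. (w$j - a$j) ^ \<beta> j)) has_sum f w) UNIV)"
proof -
  have "\<exists>c. (\<forall>\<beta>. (\<exists>j. j \<notin> UNIV \<and> \<beta> j \<noteq> 0) \<longrightarrow> c \<beta> = 0) \<and>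
        (\<forall>\<beta>. cmod (c \<beta>) \<le> M / \<rho> ^ (\<Sum>j\<in>UNIV. \<beta> j)) \<and>
        (\<forall>w. (\<forall>j. cmod (w$j - a$j) < \<rho>) \<longrightarrow>
           ((\<lambda>\<beta>. c \<beta> * (\<Prod>j\<in>UNIV. (w$j - a$j) ^ \<beta> j)) has_sum f w) UNIV)"
    by (rule osgood_aux[OF finite_class.finite_UNIV \<rho> cont hol bnd]) (simp_all add: vec_eq_iff[symmetric])
  then show ?thesis by blast
qed

lemma norm_le_l1_cvec: "norm (x :: complex^'n) \<le> (\<Sum>i\<in>UNIV. cmod (x $ i))"
  unfolding norm_vec_def by (rule L2_set_le_sum) auto

lemma pcb_sub_cball:
  assumes "\<rho> \<ge> 0"
  shows "pcb a \<rho> \<subseteq> cball (a :: complex^'k::finite) (real CARD('k) * \<rho>)"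
proof
  fix w assume "w \<in> pcb a \<rho>"
  then have "\<And>j. cmod ((w - a) $ j) \<le> \<rho>" by (simp add: pcb_def)
  then have "(\<Sum>j\<in>UNIV. cmod ((w - a) $ j)) \<le> (\<Sum>j\<in>(UNIV::'k set). \<rho>)" by (intro sum_mono) auto
  then have "norm (w - a) \<le> real CARD('k) * \<rho>" using norm_le_l1_cvec[of "w - a"] by simp
  then show "w \<in> cball a (real CARD('k) * \<rho>)" by (simp add: dist_norm norm_minus_commute)
qed

lemma compact_pcb: "\<rho> \<ge> 0 \<Longrightarrow> compact (pcb (a :: complex^'k::finite) \<rho>)"
  unfolding compact_eq_bounded_closed
proof
  assume "\<rho> \<ge> 0"
  then show "bounded (pcb a \<rho>)" using pcb_sub_cball bounded_cball bounded_subset by metis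
  show "closed (pcb a \<rho>)" unfolding pcb_def
    by (intro closed_Collect_all closed_Collect_le continuous_intros
        bounded_linear.continuous_on[OF bounded_linear_vec_nth])
qed

lemma local_expansion:
  fixes \<Omega> :: "complex^'n::finite \<Rightarrow> complex^'n" and x0 :: "real \<times> (complex^'n)"
  assumes holo: "holomorphic_several (ball 0 r) \<Omega>"
    and linpart: "(\<Omega> has_derivative linear_form A) (at 0)"
    and \<Omega>0: "\<Omega> 0 = 0" and r: "r > 0"
    and x0: "norm ((Emap x0 $ None) *s zpart (Emap x0)) < r"
  shows "\<exists>e>0. \<exists>C. \<forall>y\<in>ball x0 e.
           ((\<lambda>\<alpha>. monoR (y - x0) \<alpha> *\<^sub>R C \<alpha>) has_sum Psi \<Omega> A (Emap y)) multi_indices"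
proof -
  define D where "D = {w :: complex^('n option). norm ((w $ None) *s zpart w) < r}"
  define a where "a = Emap x0"
  have oD: "open D" unfolding D_def
    by (intro open_Collect_less continuous_intros bounded_linear.continuous_on[OF bounded_linear_vec_nth])
  have aD: "a \<in> D" using x0 by (simp add: D_def a_def)
  obtain e where e: "e > 0" "cball a e \<subseteq> D" using oD aD open_contains_cball by blast
  define \<rho> where "\<rho> = e / real CARD('n option)"
  have \<rho>: "\<rho> > 0" using e by (simp add: \<rho>_def)
  have pD: "pcb a \<rho> \<subseteq> D"
    using pcb_sub_cball[of \<rho> a] \<rho> e by (simp add: \<rho>_def)
  have Pc: "continuous_on D (Psi \<Omega> A)" unfolding D_def by (rule psi_cont[OF holo linpart \<Omega>0])
  have comp: "compact (pcb a \<rho>)" using \<rho> by (intro compact_pcb) simp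
  have "\<exists>C. \<forall>y\<in>ball x0 (\<rho>/3). ((\<lambda>\<alpha>. monoR (y - x0) \<alpha> *\<^sub>R C \<alpha>) has_sum Psi \<Omega> A (Emap y) $ i) multi_indices" for i
  proof -
    define f where "f w = Psi \<Omega> A w $ i" for w
    have fc: "continuous_on (pcb a \<rho>) f"
      unfolding f_def
      by (intro bounded_linear.continuous_on[OF bounded_linear_vec_nth] continuous_on_subset[OF Pc pD])
    have "bounded (f ` pcb a \<rho>)"
      by (intro compact_imp_bounded compact_continuous_image fc comp)
    then obtain M where M: "\<And>w. w \<in> pcb a \<rho> \<Longrightarrow> cmod (f w) \<le> M"
      unfolding bounded_iff by blast
    have fh: "(\<lambda>\<zeta>. f (vupd w j \<zeta>)) holomorphic_on ball (a$j) \<rho>" if w: "w \<in> pcb a \<rho>" for w j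
    proof -
      have inD: "vupd w j \<zeta> \<in> D" if "\<zeta> \<in> ball (a$j) \<rho>" for \<zeta>
        using that w pD by (intro subsetD[OF pD] vupd_in_pcb) (auto simp: dist_norm norm_minus_commute)
      show ?thesis
      proof (cases j)
        case None
        show ?thesis unfolding f_def None
          by (rule psi_holo_none[OF holo linpart \<Omega>0 r open_ball]) (use inD None in \<open>auto simp: D_def\<close>)
      next
        case (Some k)
        show ?thesis unfolding f_def Some
          by (rule psi_holo_some[OF holo linpart open_ball]) (use inD Some in \<open>auto simp: D_def\<close>)
      qed
    qed
    obtain c where cb: "\<And>\<beta>. cmod (c \<beta>) \<le> M / \<rho> ^ (\<Sum>j\<in>UNIV. \<beta> j)"
      and cs: "\<And>w. (\<forall>j. cmod (w$j - a$j) < \<rho>) \<Longrightarrow>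
           ((\<lambda>\<beta>. c \<beta> * (\<Prod>j\<in>UNIV. (w$j - a$j) ^ \<beta> j)) has_sum f w) UNIV"
      using osgood[OF \<rho> fc fh M] by blast
    obtain C where "\<forall>y\<in>ball x0 (\<rho>/3). ((\<lambda>\<alpha>. monoR (y - x0) \<alpha> *\<^sub>R C \<alpha>) has_sum f (Emap y)) multi_indices"
      using conv_real[OF \<rho> cb cs[unfolded a_def]] by blast
    then show ?thesis unfolding f_def by blast
  qed
  then obtain Cf where Cf: "\<And>i. \<forall>y\<in>ball x0 (\<rho>/3).
      ((\<lambda>\<alpha>. monoR (y - x0) \<alpha> *\<^sub>R Cf i \<alpha>) has_sum Psi \<Omega> A (Emap y) $ i) multi_indices"
    by metis
  define C where "C \<alpha> = (\<chi> i. Cf i \<alpha>)" for \<alpha>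
  show ?thesis
  proof (intro exI[of _ "\<rho>/3"] exI[of _ C] conjI ballI)
    show "\<rho>/3 > 0" using \<rho> by simp
    fix y assume y: "y \<in> ball x0 (\<rho>/3)"
    show "((\<lambda>\<alpha>. monoR (y - x0) \<alpha> *\<^sub>R C \<alpha>) has_sum Psi \<Omega> A (Emap y)) multi_indices"
      by (rule has_sum_vec) (use Cf y in \<open>simp add: C_def\<close>)
  qed
qed


lemma cscaleR: "r *\<^sub>R (x::complex) = complex_of_real r * x"
  by (rule scaleR_conv_of_real)

lemma oneform_scaleR_left: "oneform_apply (c *\<^sub>R X) z = complex_of_real c * oneform_apply X z"
  by (simp add: oneform_apply_def cscaleR sum_distrib_left mult_ac)

lemma oneform_scaleR_right: "oneform_apply X (c *\<^sub>R z) = complex_of_real c * oneform_apply X z"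
  by (simp add: oneform_apply_def cscaleR sum_distrib_left mult_ac)

lemma transverse_if:
  fixes w z :: "complex^'n"
  assumes w: "oneform_apply w z = 0" and z: "norm z = 1"
  shows "transverse_sphere_at w z"
  unfolding transverse_sphere_at_def
proof (rule set_eqI, rule iffI)
  fix v :: "complex^'n" assume "v \<in> UNIV"
  define a where "a = (inner v z) *\<^sub>R z"
  have zz: "inner z z = 1" using z by (simp add: power2_norm_eq_inner[symmetric])
  have "a \<in> oneform_kernel w"
    by (simp add: a_def oneform_kernel_def oneform_scaleR_right w)
  moreover have "v - a \<in> sphere_tangent z"
    by (simp add: sphere_tangent_def a_def inner_diff_left zz)
  ultimately show "v \<in> {a + b |a b. a \<in> oneform_kernel w \<and> b \<in> sphere_tangent z}"
    by (intro CollectI exI[of _ a] exI[of _ "v - a"]) auto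
qed simp

lemma scaleR_smult_comm: "r *\<^sub>R (c *s (x::complex^'n)) = c *s (r *\<^sub>R x)"
  by (simp add: vec_eq_iff cscaleR mult_ac)

lemma rescaled_holo:
  fixes \<Omega> :: "complex^'n::finite \<Rightarrow> complex^'n"
  assumes holo: "holomorphic_several (ball 0 r) \<Omega>"
    and linpart: "(\<Omega> has_derivative linear_form A) (at 0)"
    and t: "t \<in> {0..1}"
  shows "holomorphic_several (ball 0 r) (rescaled_form \<Omega> A t)"
  unfolding holomorphic_several_def
proof
  fix z :: "complex^'n" assume z: "z \<in> ball 0 r"
  have bl: "bounded_linear (linear_form A)" using linpart by (rule has_derivative_bounded_linear)
  show "\<exists>L. (rescaled_form \<Omega> A t has_derivative L) (at z) \<and> (\<forall>c v. L (c *s v) = c *s L v)"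
  proof (cases "t = 0")
    case True
    have "rescaled_form \<Omega> A t = linear_form A" using True by (simp add: fun_eq_iff rescaled_form_def)
    then show ?thesis using bl
      by (intro exI[of _ "linear_form A"]) (simp add: bounded_linear_imp_has_derivative linear_form_hom)
  next
    case False
    then have t0: "t > 0" "t \<le> 1" using t by auto
    have "norm (t *\<^sub>R z) \<le> norm z" using t0 by (simp add: mult_left_le_one_le)
    then have tz: "t *\<^sub>R z \<in> ball 0 r" using z by simp
    then obtain L where L: "(\<Omega> has_derivative L) (at (t *\<^sub>R z))" and hom: "\<forall>c v. L (c *s v) = c *s L v"
      using holo unfolding holomorphic_several_def by blast
    have eq: "rescaled_form \<Omega> A t = (\<lambda>z. inverse t *\<^sub>R \<Omega> (t *\<^sub>R z))"
      using False by (simp add: fun_eq_iff rescaled_form_def)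
    have g: "((\<lambda>z. t *\<^sub>R z) has_derivative (\<lambda>v. t *\<^sub>R v)) (at z)"
      by (rule bounded_linear_imp_has_derivative[OF bounded_linear_scaleR_right])
    have "((\<Omega> \<circ> (\<lambda>z. t *\<^sub>R z)) has_derivative (L \<circ> (\<lambda>v. t *\<^sub>R v))) (at z)"
      by (rule diff_chain_at[OF g L])
    then have "((\<lambda>z. inverse t *\<^sub>R \<Omega> (t *\<^sub>R z)) has_derivative (\<lambda>v. inverse t *\<^sub>R L (t *\<^sub>R v))) (at z)"
      using has_derivative_scaleR_right by (force simp: o_def)
    moreover have "inverse t *\<^sub>R L (t *\<^sub>R (c *s v)) = c *s (inverse t *\<^sub>R L (t *\<^sub>R v))" for c v
    proof -
      have "L (t *\<^sub>R (c *s v)) = c *s L (t *\<^sub>R v)"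
        by (simp only: scaleR_smult_comm hom)
      then show ?thesis by (simp add: scaleR_smult_comm)
    qed
    ultimately show ?thesis unfolding eq by blast
  qed
qed

lemma oneform_pos:
  fixes \<Omega> :: "complex^'n::finite \<Rightarrow> complex^'n"
  assumes radial: "\<forall>z\<in>ball 0 r. oneform_apply (\<Omega> z) z = 0"
    and t: "0 < t" "t \<le> 1" and z: "z \<in> ball 0 r"
  shows "oneform_apply (rescaled_form \<Omega> A t z) z = 0"
proof -
  have "norm (t *\<^sub>R z) \<le> norm z" using t by (simp add: mult_left_le_one_le)
  then have tz: "t *\<^sub>R z \<in> ball 0 r" using z by simp
  have "oneform_apply (\<Omega> (t *\<^sub>R z)) (t *\<^sub>R z) = 0" using radial tz by blast
  then have "oneform_apply (\<Omega> (t *\<^sub>R z)) z = 0" using t by (simp add: oneform_scaleR_right)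
  then show ?thesis using t by (simp add: rescaled_form_def oneform_scaleR_left)
qed

lemma continuous_on_Emap_t: "continuous_on UNIV (\<lambda>t::real. Emap (t, z :: complex^'n::finite))"
  unfolding Emap_def
proof (rule continuous_on_vec_lambda)
  fix ox :: "'n option"
  show "continuous_on UNIV (\<lambda>t. case ox of None \<Rightarrow> complex_of_real (fst (t, z)) | Some j \<Rightarrow> snd (t, z) $ j)"
    by (cases ox) (auto intro!: continuous_intros)
qed

lemma continuous_on_oneform: "continuous_on UNIV (\<lambda>X. oneform_apply X (z :: complex^'n))"
  unfolding oneform_apply_def
  by (intro continuous_intros bounded_linear.continuous_on[OF bounded_linear_vec_nth])

theorem lemma4p10:
  fixes \<Omega> :: "complex ^ 'n \<Rightarrow> complex ^ 'n"
    and A :: "complex ^ 'n ^ 'n"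
    and r :: real
  assumes dim: "even CARD('n)"
    and U: "cball 0 1 \<subseteq> ball (0 :: complex ^ 'n) r"
    and holo: "holomorphic_several (ball 0 r) \<Omega>"
    and radial: "\<forall>z\<in>ball 0 r. oneform_apply (\<Omega> z) z = 0"
    and transv: "\<forall>z\<in>sphere 0 1. transverse_sphere_at (\<Omega> z) z"
    and zeros: "{z\<in>cball 0 1. \<Omega> z = 0} = {0}"
    and linpart: "(\<Omega> has_derivative linear_form A) (at 0)"
    and nonsing: "det A \<noteq> 0"
  shows "real_analytic_on ({0..1} \<times> ball 0 r) (\<lambda>(t, z). rescaled_form \<Omega> A t z)
       \<and> (\<forall>z\<in>ball 0 r. rescaled_form \<Omega> A 1 z = \<Omega> z)
       \<and> (\<forall>z. rescaled_form \<Omega> A 0 z = linear_form A z)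
       \<and> (\<forall>t\<in>{0..1}. holomorphic_several (ball 0 r) (rescaled_form \<Omega> A t))
       \<and> (\<forall>t\<in>{0..1}. \<forall>z\<in>sphere 0 1. rescaled_form \<Omega> A t z \<noteq> 0 \<longrightarrow>
              transverse_sphere_at (rescaled_form \<Omega> A t z) z)"
proof -
  have "0 \<in> {z\<in>cball 0 1. \<Omega> z = 0}" using zeros by simp
  then have \<Omega>0: "\<Omega> 0 = 0" by simp
  have "(0 :: complex^'n) \<in> cball 0 1" by simp
  then have "(0 :: complex^'n) \<in> ball 0 r" using U by blast
  then have r: "r > 0" by simp
  have sph: "sphere 0 1 \<subseteq> ball (0 :: complex^'n) r" using U sphere_cball by blast
  define D where "D = {w :: complex^('n option). norm ((w $ None) *s zpart w) < r}"
  have oD: "open D" unfolding D_def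
    by (intro open_Collect_less continuous_intros bounded_linear.continuous_on[OF bounded_linear_vec_nth])
  have Pc: "continuous_on D (Psi \<Omega> A)" unfolding D_def by (rule psi_cont[OF holo linpart \<Omega>0])
  have C1: "real_analytic_on ({0..1} \<times> ball 0 r) (\<lambda>(t, z). rescaled_form \<Omega> A t z)"
    unfolding real_analytic_on_def
  proof
    fix x0 :: "real \<times> (complex^'n)" assume x0: "x0 \<in> {0..1} \<times> ball 0 r"
    obtain t0 z0 where tz: "x0 = (t0, z0)" "t0 \<in> {0..1}" "z0 \<in> ball 0 r" using x0 by auto
    have "norm ((Emap x0 $ None) *s zpart (Emap x0)) = \<bar>t0\<bar> * norm z0"
      using tz by (simp add: norm_smult_cvec)
    also have "\<dots> \<le> norm z0" using tz by (simp add: mult_left_le_one_le)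
    also have "\<dots> < r" using tz by simp
    finally obtain e C where e: "e > 0" and C: "\<And>y. y \<in> ball x0 e \<Longrightarrow>
        ((\<lambda>\<alpha>. monoR (y - x0) \<alpha> *\<^sub>R C \<alpha>) has_sum Psi \<Omega> A (Emap y)) multi_indices"
      using local_expansion[OF holo linpart \<Omega>0 r] by blast
    show "\<exists>e>0. \<exists>c. (\<forall>y\<in>ball x0 e. (\<lambda>\<alpha>. (\<Prod>b\<in>Basis. ((y - x0) \<bullet> b) ^ \<alpha> b) *\<^sub>R c \<alpha>) summable_on multi_indices) \<and>
        (\<forall>y\<in>({0..1} \<times> ball 0 r) \<inter> ball x0 e.
           ((\<lambda>\<alpha>. (\<Prod>b\<in>Basis. ((y - x0) \<bullet> b) ^ \<alpha> b) *\<^sub>R c \<alpha>) has_sum (\<lambda>(t, z). rescaled_form \<Omega> A t z) y) multi_indices)"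
    proof (intro exI[of _ e] exI[of _ C] conjI ballI e)
      fix y assume "y \<in> ball x0 e"
      then show "(\<lambda>\<alpha>. (\<Prod>b\<in>Basis. ((y - x0) \<bullet> b) ^ \<alpha> b) *\<^sub>R C \<alpha>) summable_on multi_indices"
        using C unfolding monoR_def summable_on_def by blast
    next
      fix y assume y: "y \<in> ({0..1} \<times> ball 0 r) \<inter> ball x0 e"
      obtain t z where yy: "y = (t, z)" by (cases y)
      have "Psi \<Omega> A (Emap y) = (\<lambda>(t, z). rescaled_form \<Omega> A t z) y"
        by (simp add: yy Psi_Emap)
      then show "((\<lambda>\<alpha>. (\<Prod>b\<in>Basis. ((y - x0) \<bullet> b) ^ \<alpha> b) *\<^sub>R C \<alpha>) has_sum (\<lambda>(t, z). rescaled_form \<Omega> A t z) y) multi_indices"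
        using C[of y] y unfolding monoR_def by simp
    qed
  qed
  have C4: "\<forall>t\<in>{0..1}. holomorphic_several (ball 0 r) (rescaled_form \<Omega> A t)"
    using rescaled_holo[OF holo linpart] by blast
  have orth: "oneform_apply (rescaled_form \<Omega> A t z) z = 0" if t: "t \<in> {0..1}" and z: "z \<in> sphere 0 1" for t z
  proof (cases "t = 0")
    case False
    then show ?thesis using oneform_pos[OF radial, of t z A] t z sph by auto
  next
    case True
    define g where "g t = oneform_apply (Psi \<Omega> A (Emap (t, z))) z" for t
    have ED: "Emap (0, z) \<in> D" using r by (simp add: D_def)
    have "isCont (Psi \<Omega> A) (Emap (0, z))"
      using Pc oD ED continuous_on_eq_continuous_at by blast
    moreover have "isCont (\<lambda>t::real. Emap (t, z)) 0"
      using continuous_on_Emap_t[of z] by (simp add: continuous_on_eq_continuous_at)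
    ultimately have "isCont (\<lambda>t. Psi \<Omega> A (Emap (t, z))) 0"
      by (rule continuous_at_compose[unfolded o_def, rotated])
    moreover have "isCont (\<lambda>X. oneform_apply X z) (Psi \<Omega> A (Emap (0, z)))"
      using continuous_on_oneform[of z] by (simp add: continuous_on_eq_continuous_at)
    ultimately have "isCont g 0"
      unfolding g_def by (rule isCont_o2)
    then have "(g \<longlongrightarrow> g 0) (at 0)" by (simp add: isCont_def)
    then have l1: "(g \<longlongrightarrow> g 0) (at_right 0)"
      by (rule tendsto_mono[OF at_le, rotated]) simp
    have "eventually (\<lambda>t. t \<in> {0<..<1}) (at_right (0::real))" by (rule eventually_at_right_real) simp
    then have "eventually (\<lambda>t. g t = 0) (at_right 0)"
    proof (rule eventually_mono)
      fix t :: real assume "t \<in> {0<..<1}"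
      then show "g t = 0" unfolding g_def Psi_Emap
        using oneform_pos[OF radial, of t z A] z sph by auto
    qed
    then have l2: "(g \<longlongrightarrow> 0) (at_right 0)" by (rule tendsto_eventually)
    have "g 0 = 0" using tendsto_unique[OF _ l1 l2] by simp
    then show ?thesis using True by (simp add: g_def Psi_Emap)
  qed
  have C5: "\<forall>t\<in>{0..1}. \<forall>z\<in>sphere 0 1. rescaled_form \<Omega> A t z \<noteq> 0 \<longrightarrow>
              transverse_sphere_at (rescaled_form \<Omega> A t z) z"
  proof (intro ballI impI)
    fix t z assume t: "t \<in> {0..1::real}" and z: "z \<in> sphere (0::complex^'n) 1"
    show "transverse_sphere_at (rescaled_form \<Omega> A t z) z"
      by (rule transverse_if[OF orth[OF t z]]) (use z in simp)
  qed
  show ?thesis using C1 C4 C5 by (simp add: rescaled_form_def)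
qed

end
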